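(* Let $0\neq h\in\mathbb{F}[x]$, regard $A_h\subseteq A_1$ via $x\mapsto x$, $\hat y\mapsto yh$, and let $C_{A_h}(x)=\{a\in A_h: ax=xa\}$. (i) If $\mathrm{char}(\mathbb{F})=0$, then $C_{A_h}(x)=\mathbb{F}[x]$. (ii) If $\mathrm{char}(\mathbb{F})=p>0$, then: (a) $C_{A_h}(x)=\mathbb{F}[x,h^py^p]=\bigoplus_{i\equiv 0 \bmod p}\mathbb{F}[x]\,h^iy^i$; (b) $[x,A_h]=\bigoplus_{i\not\equiv -1\bmod p}h\,\mathbb{F}[x]\,h^iy^i=\bigoplus_{i=0}^{p-2}h\,C_{A_h}(x)\,h^iy^i$; (c) $[\hat y,A_h]=\bigoplus_{i\ge0}\mathrm{im}\!\left(\tfrac{d}{dx}\right)h\,\hat y^i=\bigoplus_{j\not\equiv -1\bmod p}h x^j\,\mathbb{F}[\hat y]$, where $\mathrm{im}(\tfrac{d}{dx})\subseteq\mathbb{F}[x]$ is the image of formal differentiation.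
   Context: For $h\in\mathbb{F}[x]$, $A_h$ is the unital associative $\mathbb{F}$-algebra generated by $x,\hat y$ with defining relation $\hat yx-x\hat y=h$. $A_1$ is the Weyl algebra, generated by $x,y$ with $yx-xy=1$; for $h\ne0$, $x\mapsto x,\ \hat y\mapsto yh$ embeds $A_h$ into $A_1$. For $b\in A_h$, $[b,A_h]=\{ba-ab:a\in A_h\}$. *)

theory Defs
  imports "HOL-Computational_Algebra.Polynomial"
begin

text \<open>The Weyl algebra A_1 over a field F, realised by its normal form basis:
  an element sum_i f_i(x) y^i (f_i in F[x]) is represented by the polynomial in y
  with coefficients in F[x], i.e. by a value of type 'a poly poly whose i-th coefficient
  is f_i.  Addition is polynomial addition; multiplication is determined by yx - xy = 1:
  (f y^i)(g y^j) = sum_k (i choose k) f g^(k) y^(i+j-k).\<close>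

definition wmult :: "'a::field poly poly \<Rightarrow> 'a poly poly \<Rightarrow> 'a poly poly" where
  "wmult P Q = (\<Sum>i\<le>degree P. \<Sum>j\<le>degree Q. \<Sum>k\<le>i.
      monom (of_nat (i choose k) * coeff P i * (pderiv ^^ k) (coeff Q j)) (i + j - k))"

primrec wpow :: "'a::field poly poly \<Rightarrow> nat \<Rightarrow> 'a poly poly" where
  "wpow P 0 = 1"
| "wpow P (Suc n) = wmult P (wpow P n)"

definition W :: "'a::field poly \<Rightarrow> 'a poly poly" where
  "W f = [:f:]"

definition WX :: "'a::field poly poly" where
  "WX = W [:0, 1:]"

definition WY :: "'a::field poly poly" where
  "WY = monom 1 1"

definition yhat :: "'a::field poly \<Rightarrow> 'a poly poly" where
  "yhat h = wmult WY (W h)"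

inductive_set gen_alg :: "'a::field poly poly set \<Rightarrow> 'a poly poly set" for S where
  gen: "s \<in> S \<Longrightarrow> s \<in> gen_alg S"
| one: "1 \<in> gen_alg S"
| scal: "a \<in> gen_alg S \<Longrightarrow> W [:c:] * a \<in> gen_alg S"
| add: "a \<in> gen_alg S \<Longrightarrow> b \<in> gen_alg S \<Longrightarrow> a + b \<in> gen_alg S"
| mult: "a \<in> gen_alg S \<Longrightarrow> b \<in> gen_alg S \<Longrightarrow> wmult a b \<in> gen_alg S"

definition Ah :: "'a::field poly \<Rightarrow> 'a poly poly set" where
  "Ah h = gen_alg {WX, yhat h}"

definition Cx :: "'a::field poly \<Rightarrow> 'a poly poly set" where
  "Cx h = {a \<in> Ah h. wmult a WX = wmult WX a}"

definition commset :: "'a::field poly \<Rightarrow> 'a poly poly \<Rightarrow> 'a poly poly set" where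
  "commset h b = {wmult b a - wmult a b | a. a \<in> Ah h}"

definition sum_family :: "(nat \<Rightarrow> 'b::comm_monoid_add set) \<Rightarrow> 'b set" where
  "sum_family V = {a. \<exists>n v. (\<forall>i<n. v i \<in> V i) \<and> a = (\<Sum>i<n. v i)}"

definition indep_family :: "(nat \<Rightarrow> 'b::comm_monoid_add set) \<Rightarrow> bool" where
  "indep_family V \<longleftrightarrow> (\<forall>n v. (\<forall>i<n. v i \<in> V i) \<longrightarrow> (\<Sum>i<n. v i) = 0 \<longrightarrow> (\<forall>i<n. v i = 0))"

definition is_dsum :: "'b::comm_monoid_add set \<Rightarrow> (nat \<Rightarrow> 'b set) \<Rightarrow> bool" where
  "is_dsum M V \<longleftrightarrow> M = sum_family V \<and> indep_family V"

end

theory Submission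
  imports Defs
begin


definition D :: "'a::field poly poly \<Rightarrow> 'a poly poly" where
  "D Q = pCons 0 Q + map_poly pderiv Q"

lemma coeff_D: "coeff (D Q) n = (if n = 0 then 0 else coeff Q (n - 1)) + pderiv (coeff Q n)"
  by (simp add: D_def coeff_map_poly coeff_pCons split: nat.split)

lemma D_add: "D (P + Q) = D P + D Q"
  by (rule poly_eqI) (simp add: coeff_D pderiv_add)

lemma D_0 [simp]: "D 0 = 0"
  by (rule poly_eqI) (simp add: coeff_D)

lemma D_monom: "D (monom c n) = monom c (Suc n) + monom (pderiv c) n"
  by (rule poly_eqI) (auto simp: coeff_D coeff_monom)

lemma Dpow_add: "(D^^i) (P + Q) = (D^^i) P + (D^^i) Q"
  by (induct i) (auto simp: D_add)

lemma Dpow_0 [simp]: "(D^^i) 0 = 0"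
  by (induct i) auto

lemma Dpow_sum: "(D^^i) (\<Sum>j\<in>A. f j) = (\<Sum>j\<in>A. (D^^i) (f j))"
  using sum_comp_morphism[of "D^^i" f A] by (simp add: Dpow_add o_def)

lemma smult_sum_right: "smult a (\<Sum>j\<in>A. f j) = (\<Sum>j\<in>A. smult a (f j))"
  using sum_comp_morphism[of "smult a" f A] by (simp add: smult_add_right o_def)

lemma Dpow_monom:
  "(D^^i) (monom q j) = (\<Sum>k\<le>i. monom (of_nat (i choose k) * (pderiv^^k) q) (i + j - k))"
proof (induct i)
  case 0
  then show ?case by simp
next
  case (Suc i)
  define f where "f k = (of_nat (i choose k) * (pderiv^^k) q :: 'a poly)" for k
  have A1: "(\<Sum>k\<le>Suc i. monom (f k) (Suc i + j - k))
      = (\<Sum>k\<le>i. monom (f k) (Suc (i + j - k)))"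
    by (simp add: f_def binomial_eq_0, intro sum.cong refl) (simp add: Suc_diff_le)
  have A2: "(\<Sum>k\<le>Suc i. monom (f k) (Suc i + j - k))
      = monom q (Suc (i + j)) + (\<Sum>k\<le>i. monom (f (Suc k)) (i + j - k))"
    by (subst sum.atMost_Suc_shift) (simp add: f_def)
  have "(D^^Suc i) (monom q j) = (\<Sum>k\<le>i. D (monom (f k) (i + j - k)))"
    using Suc by (simp add: f_def sum_comp_morphism[of D, symmetric] D_add o_def)
  also have "\<dots> = (\<Sum>k\<le>i. monom (f k) (Suc (i + j - k))) + (\<Sum>k\<le>i. monom (pderiv (f k)) (i + j - k))"
    by (simp add: D_monom sum.distrib)
  also have "\<dots> = monom q (Suc (i + j)) + (\<Sum>k\<le>i. monom (f (Suc k)) (i + j - k))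
       + (\<Sum>k\<le>i. monom (pderiv (f k)) (i + j - k))"
    using A1 A2 by simp
  also have "\<dots> = monom q (Suc (i + j)) + (\<Sum>k\<le>i. monom (of_nat (Suc i choose Suc k) * (pderiv^^Suc k) q) (i + j - k))"
    by (simp add: f_def add.assoc sum.distrib[symmetric] add_monom pderiv_mult distrib_right
        pderiv_of_nat algebra_simps)
  also have "\<dots> = (\<Sum>k\<le>Suc i. monom (of_nat (Suc i choose k) * (pderiv^^k) q) (Suc i + j - k))"
    by (subst sum.atMost_Suc_shift) simp
  finally show ?case .
qed

definition WM :: "'a::field poly poly \<Rightarrow> 'a poly poly \<Rightarrow> 'a poly poly" where
  "WM P Q = (\<Sum>i\<le>degree P. smult (coeff P i) ((D^^i) Q))"

lemma wmult_WM: "wmult P Q = WM P Q"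
proof -
  have "(D^^i) Q = (D^^i) (\<Sum>j\<le>degree Q. monom (coeff Q j) j)" for i
    by (simp add: poly_as_sum_of_monoms)
  then have "(D^^i) Q = (\<Sum>j\<le>degree Q. \<Sum>k\<le>i. monom (of_nat (i choose k) * (pderiv^^k) (coeff Q j)) (i+j-k))" for i
    by (simp add: Dpow_sum Dpow_monom)
  then show ?thesis unfolding wmult_def WM_def
    by (simp add: smult_sum_right smult_monom ac_simps)
qed

lemma wmult_bound:
  assumes "degree P < n"
  shows "wmult P Q = (\<Sum>i<n. smult (coeff P i) ((D^^i) Q))"
proof -
  have "wmult P Q = (\<Sum>i<Suc (degree P). smult (coeff P i) ((D^^i) Q))"
    by (simp add: wmult_WM WM_def lessThan_Suc_atMost)
  also have "\<dots> = (\<Sum>i<n. smult (coeff P i) ((D^^i) Q))"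
    using assms by (intro sum.mono_neutral_left) (auto simp: coeff_eq_0)
  finally show ?thesis .
qed

lemma wmult_0_left [simp]: "wmult 0 Q = 0"
  by (simp add: wmult_WM WM_def)

lemma wmult_pCons: "wmult (pCons a P) Q = smult a Q + wmult P (D Q)"
proof -
  have "wmult (pCons a P) Q = (\<Sum>i<Suc (Suc (degree P)). smult (coeff (pCons a P) i) ((D^^i) Q))"
    by (rule wmult_bound) auto
  also have "\<dots> = smult a Q + (\<Sum>i<Suc (degree P). smult (coeff P i) ((D^^i) (D Q)))"
    by (subst sum.lessThan_Suc_shift) (simp add: funpow_Suc_right del: funpow.simps)
  also have "\<dots> = smult a Q + wmult P (D Q)"
    by (subst wmult_bound[of P "Suc (degree P)"]) auto
  finally show ?thesis .
qed

lemma wmult_const: "wmult [:a:] Q = smult a Q"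
  by (simp add: wmult_pCons)

lemma wmult_1_left [simp]: "wmult 1 Q = Q"
  by (metis one_pCons smult_1_left wmult_const)

lemma wmult_add_right: "wmult P (Q + R) = wmult P Q + wmult P R"
  by (simp add: wmult_WM WM_def Dpow_add smult_add_right sum.distrib)

lemma wmult_0_right [simp]: "wmult P 0 = 0"
  by (simp add: wmult_WM WM_def)

lemma wmult_add_left: "wmult (P + Q) R = wmult P R + wmult Q R"
proof (induct P arbitrary: Q R rule: pCons_induct)
  case 0
  then show ?case by simp
next
  case (pCons a P)
  obtain b Q' where Q: "Q = pCons b Q'" by (cases Q) auto
  show ?case using pCons(2)[of Q' "D R"]
    by (simp add: Q wmult_pCons smult_add_left algebra_simps)
qed

lemma wmult_smult_left: "wmult (smult f P) Q = smult f (wmult P Q)"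
  by (induct P arbitrary: Q rule: pCons_induct) (simp_all add: wmult_pCons smult_add_right)

lemma D_smult: "D (smult f S) = smult f (D S) + smult (pderiv f) S"
  by (rule poly_eqI) (simp add: coeff_D pderiv_mult algebra_simps)

lemma D_pCons: "D (pCons a Q) = pCons (pderiv a) ([:a:] + D Q)"
  by (rule poly_eqI) (simp add: coeff_D coeff_pCons split: nat.split)

lemma D_wmult: "D (wmult Q R) = wmult (D Q) R"
proof (induct Q arbitrary: R rule: pCons_induct)
  case 0
  then show ?case by simp
next
  case (pCons a Q)
  show ?case using pCons(2)[of "D R"]
    by (simp add: wmult_pCons D_pCons D_add D_smult wmult_add_left wmult_const algebra_simps)
qed

lemma wmult_assoc: "wmult (wmult P Q) R = wmult P (wmult Q R)"
proof (induct P arbitrary: Q R rule: pCons_induct)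
  case 0
  then show ?case by simp
next
  case (pCons a P)
  show ?case using pCons(2)[of "D Q" R]
    by (simp add: wmult_pCons wmult_add_left wmult_smult_left D_wmult)
qed

lemma wmult_W: "wmult (W f) Q = smult f Q"
  by (simp add: W_def wmult_const)

lemma wmult_WY: "wmult WY Q = D Q"
proof -
  have "WY = pCons 0 (1 :: 'a poly poly)" by (simp add: WY_def monom_Suc)
  then show ?thesis unfolding wmult_pCons
    by (metis add_0 smult_0_left wmult_1_left wmult_pCons)
qed

lemma Dpow_monom1: "(D^^i) (monom 1 j) = monom 1 (i + j)"
  by (induct i) (simp_all add: D_monom)

lemma wpow_WY: "wpow WY i = monom 1 i"
  by (induct i) (simp_all add: wmult_WY D_monom)

lemma wmult_monom1_right: "wmult Q (monom 1 j) = Q * monom 1 j"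
proof -
  have "wmult Q (monom 1 j) = (\<Sum>i\<le>degree Q. monom (coeff Q i) i * monom 1 j)"
    by (simp add: wmult_WM WM_def Dpow_monom1 smult_monom mult_monom)
  also have "\<dots> = Q * monom 1 j"
    by (simp add: sum_distrib_right[symmetric] poly_as_sum_of_monoms)
  finally show ?thesis .
qed

lemma wmult_1_right [simp]: "wmult Q 1 = Q"
  using wmult_monom1_right[of Q 0] by simp

lemma yhat_eq: "yhat h = [:pderiv h, h:]"
  by (simp add: yhat_def wmult_WY W_def D_pCons)

lemma wmult_yhat: "wmult (yhat h) Q = smult (pderiv h) Q + smult h (D Q)"
  by (simp add: yhat_eq wmult_pCons wmult_const)

lemma wmult_WX: "wmult WX Q = smult [:0,1:] Q"
  by (simp add: WX_def wmult_W)

lemma wpow_Suc_right: "wmult (wpow P n) P = wpow P (Suc n)"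
  by (induct n) (simp_all add: wmult_assoc)

lemma wpow_add: "wmult (wpow P m) (wpow P n) = wpow P (m + n)"
  by (induct m) (simp_all add: wmult_assoc)

lemma comm_pCons:
  "wmult (pCons a P) WX - wmult WX (pCons a P) = P + pCons 0 (wmult P WX - wmult WX P)"
proof -
  have DWX: "D WX = 1 + wmult WX WY"
    by (simp add: WX_def W_def D_pCons wmult_WY WY_def monom_Suc one_pCons pderiv_pCons wmult_const monom_0)
  have "wmult (wmult P WX) WY = pCons 0 (wmult P WX)"
    using wmult_monom1_right[of "wmult P WX" 1] by (simp add: WY_def monom_Suc)
  then have e1: "wmult P (D WX) = P + pCons 0 (wmult P WX)"
    unfolding DWX wmult_add_right wmult_assoc[symmetric] by simp
  show ?thesis
    unfolding wmult_pCons e1 wmult_WX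
    by (simp add: WX_def W_def poly_eq_iff coeff_pCons split: nat.split)
qed

lemma coeff_comm: "coeff (wmult P WX - wmult WX P) n = of_nat (Suc n) * coeff P (Suc n)"
proof (induct P arbitrary: n rule: pCons_induct)
  case 0
  then show ?case by simp
next
  case (pCons a P)
  show ?case using pCons(2)[of "n - 1"]
    by (cases n) (simp_all add: comm_pCons coeff_pCons algebra_simps)
qed



definition SS :: "'a::field poly \<Rightarrow> 'a poly poly set" where
  "SS h = {P. \<forall>i. h ^ i dvd coeff P i}"

lemma dvd_pderiv_pow:
  assumes "h ^ k dvd f" shows "h ^ (k - 1) dvd pderiv f"
proof (cases k)
  case 0
  then show ?thesis by simp
next
  case (Suc m)
  from assms obtain g where g: "f = h ^ Suc m * g" using Suc by (auto elim: dvdE)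
  have "pderiv f = h ^ m * (h * pderiv g + smult (of_nat (Suc m)) (g * pderiv h))"
    unfolding g pderiv_mult pderiv_power_Suc by (simp add: algebra_simps)
  then show ?thesis using Suc by simp
qed

definition Gp :: "'a::field poly \<Rightarrow> nat \<Rightarrow> 'a poly poly \<Rightarrow> bool" where
  "Gp h m Q \<longleftrightarrow> (\<forall>n. h ^ (n - m) dvd coeff Q n)"

lemma D_Gp: "Gp h m Q \<Longrightarrow> Gp h (Suc m) (D Q)"
  unfolding Gp_def
proof (intro allI)
  fix n assume a: "\<forall>n. h ^ (n - m) dvd coeff Q n"
  have e: "n - Suc m = n - m - 1" "n - Suc m = n - 1 - m" by arith+
  have 1: "h ^ (n - Suc m) dvd pderiv (coeff Q n)"
    using dvd_pderiv_pow[OF a[rule_format, of n]] by (subst e(1))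
  have 2: "h ^ (n - Suc m) dvd (if n = 0 then 0 else coeff Q (n - 1))"
    using a[rule_format, of "n - 1"] by (subst e(2)) simp
  show "h ^ (n - Suc m) dvd coeff (D Q) n"
    unfolding coeff_D by (rule dvd_add[OF 2 1])
qed

lemma Dpow_Gp: "Gp h m Q \<Longrightarrow> Gp h (m + i) ((D^^i) Q)"
  by (induct i) (simp_all add: D_Gp)

lemma smult_Gp:
  assumes "h ^ i dvd f" "Gp h i X" shows "Gp h 0 (smult f X)"
  unfolding Gp_def
proof
  fix n
  show "h ^ (n - 0) dvd coeff (smult f X) n"
  proof (cases "n \<le> i")
    case True
    then have "h ^ n dvd h ^ i" by (simp add: le_imp_power_dvd)
    then have "h ^ n dvd f" using assms(1) by (rule dvd_trans)
    then show ?thesis by (simp add: dvd_mult2)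
  next
    case False
    have "h ^ n = h ^ i * h ^ (n - i)" using False by (simp flip: power_add)
    then show ?thesis using assms False unfolding Gp_def by (simp add: mult_dvd_mono)
  qed
qed

lemma SS_Gp: "P \<in> SS h \<longleftrightarrow> Gp h 0 P"
  by (simp add: SS_def Gp_def)

lemma SS_add: "P \<in> SS h \<Longrightarrow> Q \<in> SS h \<Longrightarrow> P + Q \<in> SS h"
  by (simp add: SS_def)

lemma SS_sum: "(\<And>i. i \<in> A \<Longrightarrow> f i \<in> SS h) \<Longrightarrow> sum f A \<in> SS h"
  by (simp add: SS_def coeff_sum dvd_sum)

lemma SS_wmult:
  assumes "P \<in> SS h" "Q \<in> SS h" shows "wmult P Q \<in> SS h"
proof -
  have "smult (coeff P i) ((D^^i) Q) \<in> SS h" for i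
    using assms Dpow_Gp[of h 0 Q i] unfolding SS_Gp
    by (intro smult_Gp) (auto simp: Gp_def)
  then show ?thesis unfolding wmult_WM WM_def by (intro SS_sum)
qed

lemma SS_smult: "P \<in> SS h \<Longrightarrow> smult f P \<in> SS h"
  by (simp add: SS_def)

lemma gen_alg_sub_SS: "gen_alg {WX, yhat h} \<subseteq> SS h"
proof
  fix P assume "P \<in> gen_alg {WX, yhat h}"
  then show "P \<in> SS h"
  proof induct
    case (gen s)
    have "h ^ i dvd coeff WX i" for i
      by (cases i) (simp_all add: WX_def W_def)
    moreover have "h ^ i dvd coeff (yhat h) i" for i
      by (cases i; cases "i - 1") (simp_all add: yhat_eq)
    ultimately show ?case using gen by (auto simp: SS_def)
  next
    case one
    then show ?case by (simp add: SS_def coeff_1)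
  next
    case (scal a c)
    then show ?case by (simp add: W_def SS_smult)
  next
    case (add a b)
    then show ?case by (simp add: SS_add)
  next
    case (mult a b)
    then show ?case by (simp add: SS_wmult)
  qed
qed

lemma gen_alg_W:
  assumes "WX \<in> T" shows "W f \<in> gen_alg T"
proof (induct f rule: pCons_induct)
  case 0
  have "W [:0:] * 1 \<in> gen_alg T" by (intro gen_alg.scal gen_alg.one)
  then show ?case by (simp add: W_def)
next
  case (pCons c f)
  have a: "wmult WX (W f) \<in> gen_alg T" using gen_alg.mult[OF gen_alg.gen[OF assms] pCons(2)] .
  have b: "W [:c:] * 1 \<in> gen_alg T" by (intro gen_alg.scal gen_alg.one)
  have "W [:c:] * 1 + wmult WX (W f) \<in> gen_alg T" by (rule gen_alg.add[OF b a])
  moreover have "W [:c:] * 1 + wmult WX (W f) = W (pCons c f)"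
    by (simp add: wmult_WX W_def)
  ultimately show ?case by simp
qed

lemma gen_alg_smult:
  assumes "WX \<in> T" "X \<in> gen_alg T" shows "smult f X \<in> gen_alg T"
proof -
  have "wmult (W f) X \<in> gen_alg T" using assms gen_alg_W by (intro gen_alg.mult)
  then show ?thesis by (simp add: wmult_W)
qed

lemma gen_alg_0: "0 \<in> gen_alg T"
proof -
  have "W [:0:] * 1 \<in> gen_alg T" by (intro gen_alg.scal gen_alg.one)
  then show ?thesis by (simp add: W_def)
qed

lemma gen_alg_uminus:
  assumes "X \<in> gen_alg T" shows "- X \<in> gen_alg T"
proof -
  have "W [:-1:] * X \<in> gen_alg T" using assms by (rule gen_alg.scal)
  moreover have "W [:-1:] * X = - X"
  proof -
    have m: "[:-1:] = (-1::'a poly)" by (simp add: one_pCons)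
    show ?thesis by (simp add: W_def m)
  qed
  ultimately show ?thesis by simp
qed

lemma gen_alg_diff:
  "X \<in> gen_alg T \<Longrightarrow> Y \<in> gen_alg T \<Longrightarrow> X - Y \<in> gen_alg T"
  using gen_alg.add[OF _ gen_alg_uminus, of X T Y] by simp

lemma gen_alg_sum:
  "(\<And>i. i \<in> A \<Longrightarrow> f i \<in> gen_alg T) \<Longrightarrow> sum f A \<in> gen_alg T"
  by (induct A rule: infinite_finite_induct) (auto intro: gen_alg.add gen_alg_0)

lemma gen_alg_wpow: "s \<in> T \<Longrightarrow> wpow s n \<in> gen_alg T"
  by (induct n) (auto intro: gen_alg.mult gen_alg.gen gen_alg.one)

lemma wpow_yhat:
  "(\<forall>k>n. coeff (wpow (yhat h) n) k = 0) \<and> coeff (wpow (yhat h) n) n = h ^ n"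
proof (induct n)
  case 0
  then show ?case by (simp add: coeff_1)
next
  case (Suc n)
  define Y where "Y = wpow (yhat h) n"
  have Y: "\<And>k. n < k \<Longrightarrow> coeff Y k = 0" "coeff Y n = h ^ n" using Suc by (auto simp: Y_def)
  have e: "wpow (yhat h) (Suc n) = smult (pderiv h) Y + smult h (D Y)"
    by (simp add: Y_def wmult_yhat)
  show ?case
  proof (intro conjI allI impI)
    fix k assume "Suc n < k"
    then show "coeff (wpow (yhat h) (Suc n)) k = 0"
      unfolding e by (simp add: coeff_D Y)
  next
    show "coeff (wpow (yhat h) (Suc n)) (Suc n) = h ^ Suc n"
      unfolding e by (simp add: coeff_D Y)
  qed
qed

lemma SS_diff: "P \<in> SS h \<Longrightarrow> Q \<in> SS h \<Longrightarrow> P - Q \<in> SS h"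
  by (simp add: SS_def dvd_diff)

lemma SS_sub_gen_aux:
  "P \<in> SS h \<Longrightarrow> degree P \<le> n \<Longrightarrow> P \<in> gen_alg {WX, yhat h}"
proof (induct n arbitrary: P)
  case 0
  then have "P = W (coeff P 0)" unfolding W_def using degree_0_id[of P] by simp
  then show ?case by (metis gen_alg_W insertI1)
next
  case (Suc n)
  define a where "a = coeff P (Suc n) div h ^ Suc n"
  define Y where "Y = wpow (yhat h) (Suc n)"
  have Yg: "Y \<in> gen_alg {WX, yhat h}" unfolding Y_def by (rule gen_alg_wpow) simp
  then have YS: "Y \<in> SS h" using gen_alg_sub_SS by blast
  have Pa: "coeff P (Suc n) = a * h ^ Suc n"
  proof -
    have "h ^ Suc n dvd coeff P (Suc n)" using Suc(2) unfolding SS_def by blast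
    then show ?thesis unfolding a_def by (rule dvd_div_mult_self[symmetric])
  qed
  define R where "R = P - smult a Y"
  have "R \<in> SS h" unfolding R_def using SS_diff[OF Suc(2) SS_smult[OF YS]] .
  moreover have "degree R \<le> n"
  proof (rule degree_le, intro allI impI)
    fix k assume k: "n < k"
    show "coeff R k = 0"
    proof (cases "k = Suc n")
      case True
      have "coeff Y (Suc n) = h ^ Suc n" using wpow_yhat[of "Suc n" h] by (simp add: Y_def)
      then show ?thesis using Pa True by (simp add: R_def)
    next
      case False
      then have "Suc n < k" using k by simp
      have "coeff P k = 0" using Suc(3) \<open>Suc n < k\<close> by (intro coeff_eq_0) simp
      moreover have "coeff Y k = 0" using wpow_yhat[of "Suc n" h] \<open>Suc n < k\<close> by (simp add: Y_def)
      ultimately show ?thesis by (simp add: R_def)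
    qed
  qed
  ultimately have "R \<in> gen_alg {WX, yhat h}" by (rule Suc(1))
  moreover have "smult a Y \<in> gen_alg {WX, yhat h}" using gen_alg_smult[OF _ Yg] by simp
  ultimately have "R + smult a Y \<in> gen_alg {WX, yhat h}" by (rule gen_alg.add)
  then show ?case by (simp add: R_def)
qed

lemma Ah_SS: "Ah h = SS h"
proof
  show "Ah h \<subseteq> SS h" unfolding Ah_def by (rule gen_alg_sub_SS)
  show "SS h \<subseteq> Ah h" unfolding Ah_def using SS_sub_gen_aux[OF _ order_refl] by blast
qed

lemma coeff_comm': "coeff (wmult P WX - wmult WX P) n = smult (of_nat (Suc n)) (coeff P (Suc n))"
  unfolding coeff_comm by (simp add: of_nat_poly)

lemma Cx_char: "Cx (h :: 'a::field poly) = {P. P \<in> SS h \<and> (\<forall>i. \<not> CHAR('a) dvd i \<longrightarrow> coeff P i = 0)}"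
  (is "_ = ?T")
proof -
  have "wmult P WX = wmult WX P \<longleftrightarrow> (\<forall>i. \<not> CHAR('a) dvd i \<longrightarrow> coeff P i = 0)"
    for P :: "'a poly poly"
  proof -
    have "wmult P WX = wmult WX P \<longleftrightarrow> (\<forall>n. coeff (wmult P WX - wmult WX P) n = 0)"
      by (simp add: poly_eq_iff)
    also have "\<dots> \<longleftrightarrow> (\<forall>n. of_nat (Suc n) = (0::'a) \<or> coeff P (Suc n) = 0)"
      unfolding coeff_comm' by simp
    also have "\<dots> \<longleftrightarrow> (\<forall>i. \<not> CHAR('a) dvd i \<longrightarrow> coeff P i = 0)"
    proof safe
      fix i assume a: "\<forall>n. of_nat (Suc n) = (0::'a) \<or> coeff P (Suc n) = 0" "\<not> CHAR('a) dvd i"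
      then obtain n where "i = Suc n" by (cases i) auto
      then show "coeff P i = 0" using a of_nat_eq_0_iff_char_dvd[of i, where 'a='a] by metis
    next
      fix n assume "\<forall>i. \<not> CHAR('a) dvd i \<longrightarrow> coeff P i = 0" "coeff P (Suc n) \<noteq> 0"
      then show "of_nat (Suc n) = (0::'a)" using of_nat_eq_0_iff_char_dvd[of "Suc n", where 'a='a] by metis
    qed
    finally show ?thesis .
  qed
  then show ?thesis unfolding Cx_def Ah_SS by auto
qed

definition mkp :: "(nat \<Rightarrow> 'b::comm_monoid_add) \<Rightarrow> nat \<Rightarrow> 'b poly" where
  "mkp f N = (\<Sum>n\<le>N. monom (f n) n)"

lemma coeff_mkp: "coeff (mkp f N) k = (if k \<le> N then f k else 0)"
  by (simp add: mkp_def coeff_sum coeff_monom)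

definition filt :: "(nat \<Rightarrow> bool) \<Rightarrow> 'b::comm_monoid_add poly \<Rightarrow> 'b poly" where
  "filt A X = mkp (\<lambda>n. if A n then coeff X n else 0) (degree X)"

lemma coeff_filt: "coeff (filt A X) k = (if A k then coeff X k else 0)"
  by (auto simp: filt_def coeff_mkp coeff_eq_0)

lemma filt_add: "filt A (X + Y) = filt A X + filt A (Y :: 'b::comm_monoid_add poly)"
  by (rule poly_eqI) (simp add: coeff_filt)

lemma filt_0 [simp]: "filt A 0 = 0"
  by (rule poly_eqI) (simp add: coeff_filt)

lemma filt_single: "filt (\<lambda>k. k = j) X = monom (coeff X j) j"
  by (rule poly_eqI) (simp add: coeff_filt coeff_monom)

lemma dsumI:
  fixes M :: "'b::ab_group_add set"
  assumes sums_in: "\<And>n v. (\<forall>i<n. v i \<in> V i) \<Longrightarrow> (\<Sum>i<n. v i) \<in> M"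
    and decomp: "\<And>m. m \<in> M \<Longrightarrow> \<exists>n. (\<forall>i<n. \<pi> i m \<in> V i) \<and> m = (\<Sum>i<n. \<pi> i m)"
    and padd: "\<And>i a b. \<pi> i (a + b) = \<pi> i a + \<pi> i b"
    and psame: "\<And>i v. v \<in> V i \<Longrightarrow> \<pi> i v = v"
    and pother: "\<And>i j v. v \<in> V j \<Longrightarrow> i \<noteq> j \<Longrightarrow> \<pi> i v = 0"
  shows "is_dsum M V"
proof -
  have p0: "\<pi> i 0 = 0" for i using padd[of i 0 0] by simp
  have psum: "\<pi> j (\<Sum>i<n. v i) = (\<Sum>i<n. \<pi> j (v i))" for j n v
    using sum_comp_morphism[of "\<pi> j" v "{..<n}"] by (simp add: p0 padd o_def)
  have "M = sum_family V"
  proof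
    show "M \<subseteq> sum_family V"
    proof
      fix m assume "m \<in> M"
      then obtain n where "\<forall>i<n. \<pi> i m \<in> V i" "m = (\<Sum>i<n. \<pi> i m)" using decomp by blast
      then show "m \<in> sum_family V" unfolding sum_family_def
        by (intro CollectI exI[of _ n] exI[of _ "\<lambda>i. \<pi> i m"]) simp
    qed
    show "sum_family V \<subseteq> M"
    proof
      fix m assume "m \<in> sum_family V"
      then obtain n v where "\<forall>i<n. v i \<in> V i" "m = (\<Sum>i<n. v i)" unfolding sum_family_def by blast
      then show "m \<in> M" using sums_in by simp
    qed
  qed
  moreover have "indep_family V"
    unfolding indep_family_def
  proof (intro allI impI)
    fix n v j assume v: "\<forall>i<n. v i \<in> V i" and s: "(\<Sum>i<n. v i) = 0" and j: "j < n"
    have "\<pi> j (\<Sum>i<n. v i) = (\<Sum>i<n. \<pi> j (v i))" by (rule psum)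
    also have "\<dots> = (\<Sum>i<n. if i = j then v j else 0)"
      using v psame pother by (intro sum.cong) auto
    also have "\<dots> = v j" using j by simp
    finally show "v j = 0" using s p0 by simp
  qed
  ultimately show ?thesis unfolding is_dsum_def by simp
qed

lemma dsum_transport:
  fixes \<Phi> :: "'b::ab_group_add \<Rightarrow> 'c::ab_group_add"
  assumes add: "\<And>a b. \<Phi> (a + b) = \<Phi> a + \<Phi> b" and inj: "\<And>a. \<Phi> a = 0 \<Longrightarrow> a = 0"
    and ds: "is_dsum M V"
  shows "is_dsum (\<Phi> ` M) (\<lambda>i. \<Phi> ` V i)"
proof -
  have p0: "\<Phi> 0 = 0" using add[of 0 0] by simp
  have psum: "\<Phi> (\<Sum>i<n. w i) = (\<Sum>i<n. \<Phi> (w i))" for n w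
    using sum_comp_morphism[of \<Phi> w "{..<n}"] by (simp add: p0 add o_def)
  have pre: "\<exists>w. \<forall>i<n. w i \<in> V i \<and> v i = \<Phi> (w i)" if "\<forall>i<n. v i \<in> \<Phi> ` V i" for n v
  proof -
    have "\<forall>i\<in>{..<n}. \<exists>w. w \<in> V i \<and> v i = \<Phi> w" using that by blast
    then obtain w where "\<forall>i\<in>{..<n}. w i \<in> V i \<and> v i = \<Phi> (w i)" by metis
    then show ?thesis by auto
  qed
  have M: "M = sum_family V" and I: "indep_family V" using ds unfolding is_dsum_def by auto
  have "\<Phi> ` M = sum_family (\<lambda>i. \<Phi> ` V i)"
  proof
    show "\<Phi> ` M \<subseteq> sum_family (\<lambda>i. \<Phi> ` V i)"
    proof
      fix x assume "x \<in> \<Phi> ` M"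
      then obtain m where m: "m \<in> M" "x = \<Phi> m" by blast
      then obtain n w where w: "\<forall>i<n. w i \<in> V i" "m = (\<Sum>i<n. w i)"
        unfolding M sum_family_def by blast
      have "x = (\<Sum>i<n. \<Phi> (w i))" using m w psum by simp
      then show "x \<in> sum_family (\<lambda>i. \<Phi> ` V i)"
        unfolding sum_family_def using w(1)
        by (intro CollectI exI[of _ n] exI[of _ "\<lambda>i. \<Phi> (w i)"]) auto
    qed
    show "sum_family (\<lambda>i. \<Phi> ` V i) \<subseteq> \<Phi> ` M"
    proof
      fix x assume "x \<in> sum_family (\<lambda>i. \<Phi> ` V i)"
      then obtain n v where v: "\<forall>i<n. v i \<in> \<Phi> ` V i" "x = (\<Sum>i<n. v i)"
        unfolding sum_family_def by blast
      obtain w where w: "\<forall>i<n. w i \<in> V i \<and> v i = \<Phi> (w i)" using pre[OF v(1)] by blast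
      have "x = \<Phi> (\<Sum>i<n. w i)" unfolding psum v(2) using w by (intro sum.cong) auto
      moreover have "(\<Sum>i<n. w i) \<in> M" unfolding M sum_family_def using w
        by (intro CollectI exI[of _ n] exI[of _ w]) auto
      ultimately show "x \<in> \<Phi> ` M" by blast
    qed
  qed
  moreover have "indep_family (\<lambda>i. \<Phi> ` V i)"
    unfolding indep_family_def
  proof (intro allI impI)
    fix n v j assume v: "\<forall>i<n. v i \<in> \<Phi> ` V i" and s: "(\<Sum>i<n. v i) = 0" and j: "j < n"
    obtain w where w: "\<forall>i<n. w i \<in> V i \<and> v i = \<Phi> (w i)" using pre[OF v] by blast
    have "(\<Sum>i<n. v i) = \<Phi> (\<Sum>i<n. w i)" unfolding psum using w by (intro sum.cong) auto
    then have "(\<Sum>i<n. w i) = 0" using s inj by simp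
    then have "w j = 0" using I w j unfolding indep_family_def by blast
    then show "v j = 0" using w j p0 by simp
  qed
  ultimately show ?thesis unfolding is_dsum_def by simp
qed

definition UU :: "'a::field poly \<Rightarrow> 'a poly poly set" where
  "UU h = {Q. \<forall>n. h ^ Suc n dvd coeff Q n \<and> (CHAR('a) dvd Suc n \<longrightarrow> coeff Q n = 0)}"

lemma coeff_comm2:
  "coeff (wmult WX P - wmult P WX) n = - smult (of_nat (Suc n)) (coeff P (Suc n))"
proof -
  have "wmult WX P - wmult P WX = - (wmult P WX - wmult WX P)" by simp
  then show ?thesis by (simp only: coeff_minus coeff_comm')
qed

lemma commset_WX: "commset h WX = UU h"
proof
  show "commset h WX \<subseteq> UU h"
  proof
    fix Q assume "Q \<in> commset h WX"
    then obtain a where a: "a \<in> SS h" "Q = wmult WX a - wmult a WX"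
      unfolding commset_def Ah_SS by blast
    show "Q \<in> UU h" unfolding UU_def
    proof (intro CollectI allI conjI impI)
      fix n
      have "h ^ Suc n dvd coeff a (Suc n)" using a(1) unfolding SS_def by blast
      then show "h ^ Suc n dvd coeff Q n" unfolding a(2) coeff_comm2
        by (simp add: dvd_smult)
      assume "CHAR('a) dvd Suc n"
      then have "of_nat (Suc n) = (0::'a)" by (simp only: of_nat_eq_0_iff_char_dvd)
      then show "coeff Q n = 0" unfolding a(2) coeff_comm2 by simp
    qed
  qed
  show "UU h \<subseteq> commset h WX"
  proof
    fix Q assume Q: "Q \<in> UU h"
    define a where "a = pCons 0 (mkp (\<lambda>n. smult (- inverse (of_nat (Suc n))) (coeff Q n)) (degree Q))"
    have ca: "coeff a (Suc n) = smult (- inverse (of_nat (Suc n))) (coeff Q n)" for n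
      by (auto simp: a_def coeff_mkp coeff_eq_0)
    have "a \<in> SS h" unfolding SS_def
    proof (intro CollectI allI)
      fix i show "h ^ i dvd coeff a i"
      proof (cases i)
        case 0
        then show ?thesis by (simp add: a_def)
      next
        case (Suc n)
        have "h ^ Suc n dvd coeff Q n" using Q unfolding UU_def by blast
        then show ?thesis unfolding Suc ca by (rule dvd_smult)
      qed
    qed
    moreover have "Q = wmult WX a - wmult a WX"
    proof (rule poly_eqI)
      fix n
      show "coeff Q n = coeff (wmult WX a - wmult a WX) n"
      proof (cases "of_nat (Suc n) = (0::'a)")
        case True
        then have "CHAR('a) dvd Suc n" by (simp only: of_nat_eq_0_iff_char_dvd)
        then have "coeff Q n = 0" using Q unfolding UU_def by blast
        then show ?thesis unfolding coeff_comm2 ca by simp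
      next
        case False
        then show ?thesis unfolding coeff_comm2 ca by simp
      qed
    qed
    ultimately show "Q \<in> commset h WX" unfolding commset_def Ah_SS by blast
  qed
qed

lemma W_in_SS: "W f \<in> SS h"
  unfolding SS_def W_def by (auto simp: coeff_pCons split: nat.split)

lemma Cx_char0:
  assumes "CHAR('a) = 0"
  shows "Cx (h :: 'a::field poly) = {W f | f. True}"
proof -
  have "P \<in> Cx h \<longleftrightarrow> (\<exists>f. P = W f)" for P
  proof
    assume "P \<in> Cx h"
    then have "\<forall>i. i \<noteq> 0 \<longrightarrow> coeff P i = 0" unfolding Cx_char assms by auto
    then have "P = W (coeff P 0)" by (auto simp: W_def poly_eq_iff coeff_pCons split: nat.split)
    then show "\<exists>f. P = W f" by blast
  next
    assume "\<exists>f. P = W f"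
    then obtain f where "P = W f" by blast
    then show "P \<in> Cx h" unfolding Cx_char assms using W_in_SS[of f h]
      by (auto simp: W_def coeff_pCons split: nat.split)
  qed
  then show ?thesis by blast
qed

lemma D_smult_const: "D (smult [:c:] S) = smult [:c:] (D S)"
  by (simp add: D_smult)

lemma Dpow_smult_const: "(D^^i) (smult [:c:] S) = smult [:c:] ((D^^i) S)"
  by (induct i) (simp_all add: D_smult_const)

lemma wmult_smult_const_right: "wmult P (smult [:c:] Q) = smult [:c:] (wmult P Q)"
  by (simp add: wmult_WM WM_def Dpow_smult_const smult_sum_right mult.commute)

lemma yhat_1: "yhat (1::'a::field poly) = WY"
  by (simp add: yhat_eq WY_def monom_Suc one_pCons monom_0)

lemma Ah_1: "gen_alg {WX, WY :: 'a::field poly poly} = UNIV"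
proof -
  have "gen_alg {WX, WY :: 'a poly poly} = Ah 1" by (simp add: Ah_def yhat_1)
  also have "\<dots> = UNIV" by (simp add: Ah_SS SS_def)
  finally show ?thesis .
qed

lemma yp_central:
  fixes Q :: "'a::field poly poly"
  shows "wmult (monom 1 CHAR('a)) Q = wmult Q (monom 1 CHAR('a))"
proof -
  define Z :: "'a poly poly" where "Z = monom 1 CHAR('a)"
  have "Q \<in> gen_alg {WX, WY}" using Ah_1 by blast
  then have "wmult Z Q = wmult Q Z"
  proof induct
    case (gen s)
    have "wmult Z WX = wmult WX Z"
    proof -
      have "wmult Z WX - wmult WX Z = 0"
      proof (rule poly_eqI)
        fix n
        show "coeff (wmult Z WX - wmult WX Z) n = coeff 0 n"
          unfolding coeff_comm by (cases "Suc n = CHAR('a)") (auto simp: Z_def coeff_monom of_nat_poly)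
      qed
      then show ?thesis by simp
    qed
    moreover have "wmult Z WY = wmult WY Z"
      by (simp add: wmult_WY Z_def D_monom WY_def wmult_monom1_right mult_monom)
    ultimately show ?case using gen by auto
  next
    case one
    then show ?case by simp
  next
    case (scal a c)
    then show ?case by (simp add: W_def wmult_smult_left wmult_smult_const_right)
  next
    case (add a b)
    then show ?case by (simp add: wmult_add_left wmult_add_right)
  next
    case (mult a b)
    then show ?case by (metis wmult_assoc)
  qed
  then show ?thesis by (simp add: Z_def)
qed

lemma monom_central:
  fixes Q :: "'a::field poly poly"
  assumes "CHAR('a) dvd i"
  shows "wmult (monom 1 i) Q = Q * monom 1 i"
proof -
  obtain m where i: "i = CHAR('a) * m" using assms by blast
  have "wmult (monom 1 (CHAR('a) * m)) Q = wmult Q (monom 1 (CHAR('a) * m))" for Q :: "'a poly poly"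
  proof (induct m arbitrary: Q)
    case 0
    then show ?case by simp
  next
    case (Suc m)
    define Z :: "'a poly poly" where "Z = monom 1 CHAR('a)"
    define M :: "'a poly poly" where "M = monom 1 (CHAR('a) * m)"
    have e: "monom 1 (CHAR('a) * Suc m) = wmult Z M"
      by (simp add: Z_def M_def yp_central wmult_monom1_right mult_monom algebra_simps)
    have cZ: "wmult Z X = wmult X Z" for X unfolding Z_def by (rule yp_central)
    have cM: "wmult M X = wmult X M" for X unfolding M_def by (rule Suc)
    show ?case unfolding e
      by (metis cZ cM wmult_assoc)
  qed
  then show ?thesis by (simp add: i wmult_monom1_right)
qed

lemma Dpow_as_wmult: "(D^^i) Q = wmult (monom 1 i) Q"
  by (induct i) (simp_all add: D_wmult D_monom)

lemma sparse_wmult: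
  fixes c :: "'a::field poly poly"
  assumes "\<forall>i. \<not> CHAR('a) dvd i \<longrightarrow> coeff c i = 0"
  shows "wmult c Q = c * Q"
proof -
  have "smult (coeff c i) ((D^^i) Q) = monom (coeff c i) i * Q" for i
  proof (cases "CHAR('a) dvd i")
    case True
    then show ?thesis
      by (simp add: Dpow_as_wmult monom_central mult.commute[of Q] smult_monom_mult)
  next
    case False
    then show ?thesis using assms by simp
  qed
  then have "wmult c Q = (\<Sum>i\<le>degree c. monom (coeff c i) i) * Q"
    by (simp add: wmult_WM WM_def sum_distrib_right)
  then show ?thesis by (simp add: poly_as_sum_of_monoms)
qed

definition sparse :: "'a::field poly poly \<Rightarrow> bool" where
  "sparse c \<longleftrightarrow> (\<forall>i. \<not> CHAR('a) dvd i \<longrightarrow> coeff c i = 0)"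

lemma sparse_mult: "sparse P \<Longrightarrow> sparse Q \<Longrightarrow> sparse (P * Q)"
  unfolding sparse_def
proof (intro allI impI)
  fix n assume P: "\<forall>i. \<not> CHAR('a) dvd i \<longrightarrow> coeff P i = 0"
    and Q: "\<forall>i. \<not> CHAR('a) dvd i \<longrightarrow> coeff Q i = 0" and n: "\<not> CHAR('a) dvd n"
  have "coeff P i * coeff Q (n - i) = 0" if "i \<le> n" for i
  proof (cases "CHAR('a) dvd i")
    case True
    have "\<not> CHAR('a) dvd (n - i)"
    proof
      assume "CHAR('a) dvd (n - i)"
      then have "CHAR('a) dvd (i + (n - i))" using True by (rule dvd_add[rotated])
      then show False using n that by simp
    qed
    then show ?thesis using Q by simp
  next
    case False
    then show ?thesis using P by simp
  qed
  then show "coeff (P * Q) n = 0" unfolding coeff_mult by (intro sum.neutral) auto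
qed

lemma Cx_sparse: "Cx h = {P. P \<in> SS h \<and> sparse P}"
  unfolding Cx_char sparse_def by simp

lemma Cx_wmult: "a \<in> Cx h \<Longrightarrow> b \<in> Cx h \<Longrightarrow> wmult a b \<in> Cx h"
proof -
  assume a: "a \<in> Cx h" and b: "b \<in> Cx h"
  have "wmult a b = a * b" using a unfolding Cx_sparse sparse_def by (intro sparse_wmult) auto
  then show ?thesis using a b SS_wmult[of a h b] sparse_mult[of a b] unfolding Cx_sparse by auto
qed

lemma Cx_add: "a \<in> Cx h \<Longrightarrow> b \<in> Cx h \<Longrightarrow> a + b \<in> Cx h"
  unfolding Cx_sparse sparse_def by (auto simp: SS_add)

lemma Cx_0: "0 \<in> Cx h"
  unfolding Cx_sparse sparse_def by (simp add: SS_def)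

lemma closed_sum:
  assumes "0 \<in> M" "\<And>a b. a \<in> M \<Longrightarrow> b \<in> M \<Longrightarrow> a + b \<in> M" "\<forall>i<(n::nat). v i \<in> M"
  shows "(\<Sum>i<n. v i) \<in> M"
  using assms(3) by (induct n) (auto intro: assms(1,2))

lemma Zh_eq: "wmult (W (h ^ p)) (wpow WY p) = monom (h ^ p) p"
  by (simp add: wmult_W wpow_WY smult_monom)

lemma monom_SS: "h ^ i dvd c \<Longrightarrow> monom c i \<in> SS h"
  by (auto simp: SS_def coeff_monom)

lemma Cx_gen:
  fixes h :: "'a::field poly"
  assumes p: "CHAR('a) > 0"
  shows "Cx h = gen_alg {WX, wmult (W (h ^ CHAR('a))) (wpow WY CHAR('a))}"
proof
  define Zh where "Zh = monom (h ^ CHAR('a)) CHAR('a)"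
  have Zh: "wmult (W (h ^ CHAR('a))) (wpow WY CHAR('a)) = Zh" by (simp add: Zh_def Zh_eq)
  have ZhC: "Zh \<in> Cx h" unfolding Cx_sparse sparse_def Zh_def
    by (auto simp: monom_SS coeff_monom)
  have nz: "\<forall>i. \<not> CHAR('a) dvd i \<longrightarrow> 0 < i" by (metis dvd_0_right gr0I)
  have WXC: "WX \<in> Cx h" unfolding Cx_sparse sparse_def WX_def
    using W_in_SS nz by (auto simp: W_def coeff_pCons split: nat.split)
  show "gen_alg {WX, wmult (W (h ^ CHAR('a))) (wpow WY CHAR('a))} \<subseteq> Cx h"
    unfolding Zh
  proof
    fix P assume "P \<in> gen_alg {WX, Zh}"
    then show "P \<in> Cx h"
    proof induct
      case (gen s)
      then show ?case using ZhC WXC by auto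
    next
      case one
      then show ?case unfolding Cx_sparse sparse_def using nz by (simp add: SS_def coeff_1)
    next
      case (scal a c)
      then show ?case unfolding Cx_sparse sparse_def by (simp add: W_def SS_smult)
    next
      case (add a b)
      then show ?case by (simp add: Cx_add)
    next
      case (mult a b)
      then show ?case by (simp add: Cx_wmult)
    qed
  qed
  have powZ: "wpow Zh m = monom (h ^ (CHAR('a) * m)) (CHAR('a) * m)" for m
  proof (induct m)
    case 0
    then show ?case by simp
  next
    case (Suc m)
    have "wmult Zh (wpow Zh m) = Zh * wpow Zh m"
      by (rule sparse_wmult) (auto simp: Zh_def coeff_monom)
    then show ?case using Suc by (simp add: Zh_def mult_monom power_add)
  qed
  show "Cx h \<subseteq> gen_alg {WX, wmult (W (h ^ CHAR('a))) (wpow WY CHAR('a))}"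
    unfolding Zh
  proof
    fix P assume P: "P \<in> Cx h"
    have "monom (coeff P i) i \<in> gen_alg {WX, Zh}" for i
    proof (cases "CHAR('a) dvd i")
      case True
      then obtain m where i: "i = CHAR('a) * m" by blast
      have "h ^ i dvd coeff P i" using P unfolding Cx_sparse SS_def by blast
      then obtain a where a: "coeff P i = h ^ i * a" by blast
      have "monom (coeff P i) i = smult a (wpow Zh m)" unfolding a powZ i[symmetric] by (simp add: smult_monom mult.commute)
      moreover have "smult a (wpow Zh m) \<in> gen_alg {WX, Zh}"
        by (intro gen_alg_smult gen_alg_wpow) auto
      ultimately show ?thesis by simp
    next
      case False
      then show ?thesis using P gen_alg_0 unfolding Cx_sparse sparse_def by auto
    qed
    then have "(\<Sum>i\<le>degree P. monom (coeff P i) i) \<in> gen_alg {WX, Zh}" by (intro gen_alg_sum)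
    then show "P \<in> gen_alg {WX, Zh}" by (simp add: poly_as_sum_of_monoms)
  qed
qed

lemma dsum_single:
  fixes M :: "'b::comm_ring poly set"
  assumes conc: "\<And>i v. v \<in> V i \<Longrightarrow> v = monom (coeff v i) i"
    and sums_in: "\<And>n v. (\<forall>i<n. v i \<in> V i) \<Longrightarrow> (\<Sum>i<n. v i) \<in> M"
    and proj: "\<And>m i. m \<in> M \<Longrightarrow> monom (coeff m i) i \<in> V i"
  shows "is_dsum M V"
proof (rule dsumI[where \<pi> = "\<lambda>i X. monom (coeff X i) i"])
  show "\<exists>n. (\<forall>i<n. monom (coeff m i) i \<in> V i) \<and> m = (\<Sum>i<n. monom (coeff m i) i)"
    if "m \<in> M" for m
    using proj[OF that] poly_as_sum_of_monoms[of m]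
    by (intro exI[of _ "Suc (degree m)"]) (simp add: lessThan_Suc_atMost)
  show "monom (coeff (a + b) i) i = monom (coeff a i) i + monom (coeff b i) i" for i a b
    by (simp add: add_monom)
  show "monom (coeff v i) i = v" if "v \<in> V i" for i v
    using conc[OF that] by simp
  show "monom (coeff v i) i = 0" if "v \<in> V j" "i \<noteq> j" for i j v
    using conc[OF that(1)] that(2) by (metis coeff_monom monom_eq_0_iff)
qed (rule sums_in)

lemma elem_a: "wmult (W f) (wmult (W (h ^ i)) (wpow WY i)) = monom (f * h ^ i) i"
  by (simp add: wmult_W wpow_WY smult_monom)

lemma elem_b1: "wmult (W h) (wmult (W f) (wmult (W (h ^ i)) (wpow WY i))) = monom (h * (f * h ^ i)) i"
  by (simp add: wmult_W wpow_WY smult_monom)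

lemma claim_a2:
  fixes h :: "'a::field poly"
  shows "is_dsum (Cx h)
    (\<lambda>i. if CHAR('a) dvd i then {wmult (W f) (wmult (W (h ^ i)) (wpow WY i)) | f. True} else {0})"
  unfolding elem_a
proof (rule dsum_single)
  fix i v assume "v \<in> (if CHAR('a) dvd i then {monom (f * h ^ i) i |f. True} else {0})"
  then show "v = monom (coeff v i) i" by (auto split: if_splits)
next
  fix n and v :: "nat \<Rightarrow> 'a poly poly"
  assume v: "\<forall>i<n. v i \<in> (if CHAR('a) dvd i then {monom (f * h ^ i) i |f. True} else {0})"
  have "v i \<in> Cx h" if iv: "i < n" for i
  proof (cases "CHAR('a) dvd i")
    case True
    then obtain f where "v i = monom (f * h ^ i) i" using v[rule_format, OF iv] by auto
    then show ?thesis unfolding Cx_sparse sparse_def using True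
      by (auto simp: monom_SS coeff_monom)
  next
    case False
    then show ?thesis using v[rule_format, OF iv] Cx_0 by auto
  qed
  then show "(\<Sum>i<n. v i) \<in> Cx h" by (intro closed_sum Cx_0 Cx_add) auto
next
  fix m i assume m: "m \<in> Cx h"
  show "monom (coeff m i) i \<in> (if CHAR('a) dvd i then {monom (f * h ^ i) i |f. True} else {0})"
  proof (cases "CHAR('a) dvd i")
    case True
    have "h ^ i dvd coeff m i" using m unfolding Cx_sparse SS_def by blast
    then obtain a where "coeff m i = h ^ i * a" by blast
    then show ?thesis using True by (auto simp: mult.commute)
  next
    case False
    then show ?thesis using m unfolding Cx_sparse sparse_def by auto
  qed
qed

lemma UU_0: "0 \<in> UU h"
  by (simp add: UU_def)

lemma UU_add: "a \<in> UU h \<Longrightarrow> b \<in> UU h \<Longrightarrow> a + b \<in> UU h"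
  by (simp add: UU_def)

lemma claim_b1:
  fixes h :: "'a::field poly"
  shows "is_dsum (commset h WX)
           (\<lambda>i. if (i + 1) mod CHAR('a) \<noteq> 0
                then {wmult (W h) (wmult (W f) (wmult (W (h ^ i)) (wpow WY i))) | f. True} else {0})"
  unfolding elem_b1 commset_WX
proof (rule dsum_single)
  fix i v assume "v \<in> (if (i + 1) mod CHAR('a) \<noteq> 0 then {monom (h * (f * h ^ i)) i |f. True} else {0})"
  then show "v = monom (coeff v i) i" by (auto split: if_splits)
next
  fix n and v :: "nat \<Rightarrow> 'a poly poly"
  assume v: "\<forall>i<n. v i \<in> (if (i + 1) mod CHAR('a) \<noteq> 0 then {monom (h * (f * h ^ i)) i |f. True} else {0})"
  have "v i \<in> UU h" if iv: "i < n" for i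
  proof (cases "(i + 1) mod CHAR('a) \<noteq> 0")
    case True
    then obtain f where vi: "v i = monom (h * (f * h ^ i)) i" using v[rule_format, OF iv] by auto
    have "\<not> CHAR('a) dvd Suc i" using True by (simp add: mod_eq_0_iff_dvd)
    then show ?thesis unfolding UU_def vi
      by (auto simp: coeff_monom)
  next
    case False
    then show ?thesis using v[rule_format, OF iv] UU_0 by auto
  qed
  then show "(\<Sum>i<n. v i) \<in> UU h" by (intro closed_sum UU_0 UU_add) auto
next
  fix m i assume m: "m \<in> UU h"
  show "monom (coeff m i) i \<in> (if (i + 1) mod CHAR('a) \<noteq> 0 then {monom (h * (f * h ^ i)) i |f. True} else {0})"
  proof (cases "(i + 1) mod CHAR('a) \<noteq> 0")
    case True
    have "h ^ Suc i dvd coeff m i" using m unfolding UU_def by blast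
    then obtain a where "coeff m i = h ^ Suc i * a" by blast
    then show ?thesis using True by (auto simp: algebra_simps)
  next
    case False
    then have "CHAR('a) dvd Suc i" by (simp add: mod_eq_0_iff_dvd)
    then show ?thesis using m False unfolding UU_def by auto
  qed
qed

lemma coeff_mult_monom_right: "coeff (c * monom g j) n = (if n < j then 0 else coeff c (n - j) * g)"
proof -
  have "c * monom g j = monom g j * c" by (rule mult.commute)
  then show ?thesis by (simp add: coeff_monom_mult mult.commute[of g])
qed

lemma elem_b2:
  assumes "c \<in> Cx h"
  shows "wmult (W h) (wmult c (wmult (W (h ^ i)) (wpow WY i))) = c * monom (h ^ Suc i) i"
proof -
  have "wmult c (monom (h ^ i) i) = c * monom (h ^ i) i"
    using assms unfolding Cx_sparse sparse_def by (intro sparse_wmult) auto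
  moreover have "smult h (c * monom (h ^ i) i) = c * monom (h ^ Suc i) i"
    by (metis mult_smult_right smult_monom power_Suc)
  ultimately show ?thesis by (simp add: wmult_W wpow_WY smult_monom)
qed

lemma mod_dvd_shift:
  fixes p :: nat
  assumes "i < p" "i \<le> n"
  shows "p dvd (n - i) \<longleftrightarrow> n mod p = i"
proof
  assume "p dvd (n - i)"
  then obtain k where "n - i = p * k" by blast
  then have "n = p * k + i" using assms by simp
  then show "n mod p = i" using assms by simp
next
  assume a: "n mod p = i"
  have "n = p * (n div p) + n mod p" by simp
  then have "n - i = p * (n div p)" using a by linarith
  then show "p dvd (n - i)" by simp
qed

lemma dvd_div_pow:
  fixes h x :: "'a::field poly"
  assumes "h \<noteq> 0" "h ^ (a + b) dvd x"
  shows "h ^ a dvd x div h ^ b"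
proof -
  obtain y where "x = h ^ (a + b) * y" using assms(2) by blast
  then have "x div h ^ b = h ^ a * y" using assms(1) by (simp add: power_add)
  then show ?thesis by simp
qed

lemma b2_elem_props:
  fixes h :: "'a::field poly"
  assumes c: "c \<in> Cx h" and i: "Suc i < CHAR('a)"
  shows "c * monom (h ^ Suc i) i \<in> UU h"
    and "coeff (c * monom (h ^ Suc i) i) n \<noteq> 0 \<Longrightarrow> n mod CHAR('a) = i"
proof -
  have supp: "n mod CHAR('a) = i" if "coeff (c * monom (h ^ Suc i) i) n \<noteq> 0" for n
  proof -
    have ni: "i \<le> n" "coeff c (n - i) \<noteq> 0" using that by (auto simp: coeff_mult_monom_right split: if_splits)
    then have "CHAR('a) dvd (n - i)" using c unfolding Cx_sparse sparse_def by blast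
    then show ?thesis using mod_dvd_shift[of i "CHAR('a)" n] ni i by simp
  qed
  then show "coeff (c * monom (h ^ Suc i) i) n \<noteq> 0 \<Longrightarrow> n mod CHAR('a) = i" .
  show "c * monom (h ^ Suc i) i \<in> UU h" unfolding UU_def
  proof (intro CollectI allI conjI impI)
    fix n
    show "h ^ Suc n dvd coeff (c * monom (h ^ Suc i) i) n"
    proof (cases "n < i")
      case True
      then show ?thesis by (simp add: coeff_mult_monom_right)
    next
      case False
      have "h ^ (n - i) dvd coeff c (n - i)" using c unfolding Cx_sparse SS_def by blast
      then have X: "h ^ (n - i) * h ^ Suc i dvd coeff c (n - i) * h ^ Suc i" by (rule mult_dvd_mono) simp
      have Y: "h ^ (n - i) * h ^ Suc i = h ^ Suc n" using False by (simp flip: power_add)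
      have e: "coeff (c * monom (h ^ Suc i) i) n = coeff c (n - i) * h ^ Suc i"
        using False by (simp add: coeff_mult_monom_right)
      show ?thesis unfolding e using X[unfolded Y] .
    qed
  next
    fix n assume d: "CHAR('a) dvd Suc n"
    show "coeff (c * monom (h ^ Suc i) i) n = 0"
    proof (rule ccontr)
      assume "coeff (c * monom (h ^ Suc i) i) n \<noteq> 0"
      then have "n mod CHAR('a) = i" by (rule supp)
      then have "Suc n mod CHAR('a) = Suc i mod CHAR('a)" by (metis mod_Suc_eq)
      then show False using d i by simp
    qed
  qed
qed

lemma claim_b2:
  fixes h :: "'a::field poly"
  assumes h: "h \<noteq> 0" and p: "CHAR('a) > 0"
  shows "is_dsum (commset h WX)
           (\<lambda>i. if i \<le> CHAR('a) - 2
                then {wmult (W h) (wmult c (wmult (W (h ^ i)) (wpow WY i))) | c. c \<in> Cx h} else {0})"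
proof -
  let ?p = "CHAR('a)"
  have p2: "?p \<ge> 2" using p CHAR_not_1[where 'a='a] by linarith
  define V where "V i = (if i \<le> ?p - 2 then {c * monom (h ^ Suc i) i | c. c \<in> Cx h} else {0})" for i
  have eqV: "(\<lambda>i. if i \<le> ?p - 2
                then {wmult (W h) (wmult c (wmult (W (h ^ i)) (wpow WY i))) | c. c \<in> Cx h} else {0}) = V"
  proof (rule ext)
    fix i
    have "{wmult (W h) (wmult c (wmult (W (h ^ i)) (wpow WY i))) | c. c \<in> Cx h}
        = (\<lambda>c. wmult (W h) (wmult c (wmult (W (h ^ i)) (wpow WY i)))) ` Cx h"
      by (rule Setcompr_eq_image)
    also have "\<dots> = (\<lambda>c. c * monom (h ^ Suc i) i) ` Cx h"
      by (rule image_cong[OF refl elem_b2])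
    also have "\<dots> = {c * monom (h ^ Suc i) i | c. c \<in> Cx h}"
      by (rule Setcompr_eq_image[symmetric])
    finally show "(if i \<le> ?p - 2
                then {wmult (W h) (wmult c (wmult (W (h ^ i)) (wpow WY i))) | c. c \<in> Cx h} else {0}) = V i"
      by (simp add: V_def)
  qed
  have VU: "v \<in> UU h" if vV: "v \<in> V i" for v i
  proof (cases "i \<le> ?p - 2")
    case True
    then obtain c where "c \<in> Cx h" "v = c * monom (h ^ Suc i) i" using vV by (auto simp: V_def)
    moreover have "Suc i < ?p" using True p2 by linarith
    ultimately show ?thesis using b2_elem_props(1) by blast
  next
    case False
    then show ?thesis using vV UU_0 by (simp add: V_def)
  qed
  have Vsupp: "coeff v n = 0" if vV: "v \<in> V i" and nm: "n mod ?p \<noteq> i" for v i n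
  proof (cases "i \<le> ?p - 2")
    case True
    then obtain c where "c \<in> Cx h" "v = c * monom (h ^ Suc i) i" using vV by (auto simp: V_def)
    moreover have "Suc i < ?p" using True p2 by linarith
    ultimately show ?thesis using b2_elem_props(2) nm by blast
  next
    case False
    then show ?thesis using vV by (simp add: V_def)
  qed
  have "is_dsum (UU h) V"
  proof (rule dsumI[where \<pi> = "\<lambda>i. filt (\<lambda>k. k mod ?p = i)"])
    fix n and v :: "nat \<Rightarrow> 'a poly poly" assume "\<forall>i<n. v i \<in> V i"
    then show "(\<Sum>i<n. v i) \<in> UU h" using VU by (intro closed_sum UU_0 UU_add) auto
  next
    fix i a b show "filt (\<lambda>k. k mod ?p = i) (a + b) = filt (\<lambda>k. k mod ?p = i) a + filt (\<lambda>k. k mod ?p = i) b"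
      by (rule filt_add)
  next
    fix i v assume v: "v \<in> V i"
    show "filt (\<lambda>k. k mod ?p = i) v = v"
      by (rule poly_eqI) (auto simp: coeff_filt Vsupp[OF v])
  next
    fix i j v assume v: "v \<in> V j" and ij: "i \<noteq> j"
    show "filt (\<lambda>k. k mod ?p = i) v = 0"
      by (rule poly_eqI) (auto simp: coeff_filt Vsupp[OF v] ij)
  next
    fix m assume m: "m \<in> UU h"
    have mdvd: "h ^ Suc n dvd coeff m n" for n using m unfolding UU_def by blast
    have m0: "coeff m n = 0" if "?p dvd Suc n" for n using m that unfolding UU_def by blast
    have sum: "m = (\<Sum>i<?p. filt (\<lambda>k. k mod ?p = i) m)"
    proof (rule poly_eqI)
      fix k
      have "(\<Sum>i<?p. coeff (filt (\<lambda>k. k mod ?p = i) m) k) = (\<Sum>i<?p. if i = k mod ?p then coeff m k else 0)"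
        by (intro sum.cong) (auto simp: coeff_filt)
      also have "\<dots> = coeff m k" using p by simp
      finally show "coeff m k = coeff (\<Sum>i<?p. filt (\<lambda>k. k mod ?p = i) m) k"
        by (simp add: coeff_sum)
    qed
    have inV: "filt (\<lambda>k. k mod ?p = i) m \<in> V i" if ip: "i < ?p" for i
    proof (cases "i \<le> ?p - 2")
      case True
      define c where "c = mkp (\<lambda>k. if ?p dvd k then coeff m (k + i) div h ^ Suc i else 0) (degree m)"
      have cc: "coeff c k = (if k \<le> degree m \<and> ?p dvd k then coeff m (k + i) div h ^ Suc i else 0)" for k
        by (simp add: c_def coeff_mkp)
      have "c \<in> Cx h" unfolding Cx_sparse sparse_def SS_def
      proof (intro CollectI conjI allI impI)
        fix k
        have "h ^ (k + Suc i) dvd coeff m (k + i)" using mdvd[of "k + i"] by simp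
        then have "h ^ k dvd coeff m (k + i) div h ^ Suc i" by (rule dvd_div_pow[OF h])
        then show "h ^ k dvd coeff c k" unfolding cc by simp
      next
        fix k assume "\<not> ?p dvd k" then show "coeff c k = 0" unfolding cc by simp
      qed
      moreover have "c * monom (h ^ Suc i) i = filt (\<lambda>k. k mod ?p = i) m"
      proof (rule poly_eqI)
        fix n
        show "coeff (c * monom (h ^ Suc i) i) n = coeff (filt (\<lambda>k. k mod ?p = i) m) n"
        proof (cases "n < i")
          case True
          then have "n mod ?p \<noteq> i" using ip by simp
          then show ?thesis using True by (simp add: coeff_mult_monom_right coeff_filt)
        next
          case False
          have sh: "?p dvd (n - i) \<longleftrightarrow> n mod ?p = i" using mod_dvd_shift[OF ip] False by simp
          have ni: "n - i + i = n" using False by simp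
          show ?thesis
          proof (cases "n - i \<le> degree m")
            case True
            have "h ^ Suc i dvd h ^ Suc n" using False by (intro le_imp_power_dvd) simp
            then have "h ^ Suc i dvd coeff m n" using mdvd[of n] by (rule dvd_trans)
            then have "coeff m n div h ^ Suc i * h ^ Suc i = coeff m n" by simp
            then show ?thesis using False True sh
              by (simp add: coeff_mult_monom_right coeff_filt cc ni)
          next
            case dg: False
            then have "coeff m n = 0" by (intro coeff_eq_0) simp
            then show ?thesis using False dg by (simp add: coeff_mult_monom_right coeff_filt cc)
          qed
        qed
      qed
      ultimately have "filt (\<lambda>k. k mod ?p = i) m \<in> {c * monom (h ^ Suc i) i | c. c \<in> Cx h}"
        by (metis (mono_tags, lifting) mem_Collect_eq)
      then show ?thesis unfolding V_def using True by (simp only: if_True)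
    next
      case False
      then have ipm: "i = ?p - 1" using ip by simp
      have "filt (\<lambda>k. k mod ?p = i) m = 0"
      proof (rule poly_eqI)
        fix n
        show "coeff (filt (\<lambda>k. k mod ?p = i) m) n = coeff 0 n"
        proof (cases "n mod ?p = i")
          case True
          have "n = ?p * (n div ?p) + n mod ?p" by simp
          then have "Suc n = ?p * (Suc (n div ?p))" using True ipm p by simp
          then have "?p dvd Suc n" by (metis dvd_triv_left)
          then show ?thesis using True m0 by (simp add: coeff_filt)
        next
          case False
          then show ?thesis by (simp add: coeff_filt)
        qed
      qed
      then show ?thesis using False by (simp add: V_def)
    qed
    show "\<exists>n. (\<forall>i<n. filt (\<lambda>k. k mod ?p = i) m \<in> V i) \<and> m = (\<Sum>i<n. filt (\<lambda>k. k mod ?p = i) m)"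
      using inV sum by blast
  qed
  then show ?thesis unfolding eqV commset_WX .
qed

definition Phi :: "'a::field poly \<Rightarrow> 'a poly poly \<Rightarrow> 'a poly poly" where
  "Phi h F = (\<Sum>i\<le>degree F. smult (coeff F i) (wpow (yhat h) i))"

lemma Phi_bound:
  assumes "degree F < n"
  shows "Phi h F = (\<Sum>i<n. smult (coeff F i) (wpow (yhat h) i))"
proof -
  have "Phi h F = (\<Sum>i<Suc (degree F). smult (coeff F i) (wpow (yhat h) i))"
    by (simp add: Phi_def lessThan_Suc_atMost)
  also have "\<dots> = (\<Sum>i<n. smult (coeff F i) (wpow (yhat h) i))"
    using assms by (intro sum.mono_neutral_left) (auto simp: coeff_eq_0)
  finally show ?thesis .
qed

lemma Phi_add: "Phi h (F + G) = Phi h F + Phi h G"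
proof -
  define n where "n = Suc (degree F + degree G)"
  have "degree (F + G) < n" unfolding n_def using degree_add_le_max[of F G] by simp
  then show ?thesis
    by (simp add: Phi_bound[of _ n] n_def smult_add_left sum.distrib)
qed

lemma Phi_0 [simp]: "Phi h 0 = 0"
  by (simp add: Phi_def)

lemma Phi_smult: "Phi h (smult f F) = smult f (Phi h F)"
proof -
  have "degree (smult f F) < Suc (degree F)" using degree_smult_le[of f F] by simp
  then have a: "Phi h (smult f F) = (\<Sum>i<Suc (degree F). smult (coeff (smult f F) i) (wpow (yhat h) i))"
    by (rule Phi_bound)
  have b: "Phi h F = (\<Sum>i<Suc (degree F). smult (coeff F i) (wpow (yhat h) i))"
    by (rule Phi_bound) simp
  show ?thesis unfolding a b smult_sum_right by simp
qed

lemma Phi_monom: "Phi h (monom c i) = smult c (wpow (yhat h) i)"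
proof -
  have "degree (monom c i) < Suc i" using degree_monom_le[of c i] by simp
  then show ?thesis
    by (simp add: Phi_bound[of _ "Suc i"] coeff_monom)
qed

lemma Phi_inj:
  assumes h: "h \<noteq> 0" and z: "Phi h F = 0"
  shows "F = 0"
proof (rule ccontr)
  assume F: "F \<noteq> 0"
  define d where "d = degree F"
  have "coeff (Phi h F) d = (\<Sum>i\<le>d. coeff F i * coeff (wpow (yhat h) i) d)"
    by (simp add: Phi_def d_def coeff_sum)
  also have "\<dots> = (\<Sum>i\<le>d. if i = d then coeff F d * h ^ d else 0)"
  proof (intro sum.cong refl)
    fix i assume "i \<in> {..d}"
    then show "coeff F i * coeff (wpow (yhat h) i) d = (if i = d then coeff F d * h ^ d else 0)"
      using wpow_yhat[of i h] by auto
  qed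
  also have "\<dots> = coeff F d * h ^ d" by simp
  finally have "coeff F d * h ^ d = 0" using z by simp
  moreover have "coeff F d \<noteq> 0" using F by (simp add: d_def)
  ultimately show False using h by simp
qed

lemma Phi_in_Ah: "Phi h F \<in> Ah h"
  unfolding Phi_def Ah_def
  by (intro gen_alg_sum gen_alg_smult gen_alg_wpow) auto

lemma Ah_Phi_aux:
  "P \<in> SS h \<Longrightarrow> degree P \<le> n \<Longrightarrow> \<exists>F. P = Phi h F"
proof (induct n arbitrary: P)
  case 0
  then have "P = Phi h (monom (coeff P 0) 0)"
    using degree_0_id[of P] by (simp add: Phi_monom)
  then show ?case by blast
next
  case (Suc n)
  define a where "a = coeff P (Suc n) div h ^ Suc n"
  define Y where "Y = wpow (yhat h) (Suc n)"
  have YS: "Y \<in> SS h" unfolding Y_def using gen_alg_sub_SS gen_alg_wpow[of "yhat h" "{WX, yhat h}"] by blast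
  have Pa: "coeff P (Suc n) = a * h ^ Suc n"
  proof -
    have "h ^ Suc n dvd coeff P (Suc n)" using Suc(2) unfolding SS_def by blast
    then show ?thesis unfolding a_def by (rule dvd_div_mult_self[symmetric])
  qed
  define R where "R = P - smult a Y"
  have "R \<in> SS h" unfolding R_def using SS_diff[OF Suc(2) SS_smult[OF YS]] .
  moreover have "degree R \<le> n"
  proof (rule degree_le, intro allI impI)
    fix k assume k: "n < k"
    show "coeff R k = 0"
    proof (cases "k = Suc n")
      case True
      have "coeff Y (Suc n) = h ^ Suc n" using wpow_yhat[of "Suc n" h] by (simp add: Y_def)
      then show ?thesis using Pa True by (simp add: R_def)
    next
      case False
      then have "Suc n < k" using k by simp
      have "coeff P k = 0" using Suc(3) \<open>Suc n < k\<close> by (intro coeff_eq_0) simp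
      moreover have "coeff Y k = 0" using wpow_yhat[of "Suc n" h] \<open>Suc n < k\<close> by (simp add: Y_def)
      ultimately show ?thesis by (simp add: R_def)
    qed
  qed
  ultimately obtain G where G: "R = Phi h G" using Suc(1) by blast
  have "Phi h (G + monom a (Suc n)) = R + smult a Y" unfolding Phi_add Phi_monom G Y_def ..
  then have "P = Phi h (G + monom a (Suc n))" by (simp add: R_def)
  then show ?case by blast
qed

lemma Ah_Phi: "P \<in> Ah h \<Longrightarrow> \<exists>F. P = Phi h F"
  unfolding Ah_SS using Ah_Phi_aux[OF _ order_refl] by blast

lemma wmult_sum_right: "wmult P (\<Sum>i\<in>A. f i) = (\<Sum>i\<in>A. wmult P (f i))"
  using sum_comp_morphism[of "wmult P" f A] by (simp add: wmult_add_right o_def)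

lemma wmult_sum_left: "wmult (\<Sum>i\<in>A. f i) Q = (\<Sum>i\<in>A. wmult (f i) Q)"
  using sum_comp_morphism[of "\<lambda>P. wmult P Q" f A] by (simp add: wmult_add_left o_def)

lemma yhat_smult: "wmult (yhat h) (smult f X) = smult f (wmult (yhat h) X) + smult (h * pderiv f) X"
  by (simp add: wmult_yhat D_smult smult_add_right algebra_simps)

lemma comm_yhat:
  "wmult (yhat h) (Phi h F) - wmult (Phi h F) (yhat h) = Phi h (map_poly (\<lambda>f. h * pderiv f) F)"
proof -
  let ?n = "Suc (degree F)"
  have dg: "degree (map_poly (\<lambda>f. h * pderiv f) F) < ?n"
  proof -
    have "degree (map_poly (\<lambda>f. h * pderiv f) F) \<le> degree F"
      by (rule degree_le) (auto simp: coeff_map_poly coeff_eq_0)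
    then show ?thesis by simp
  qed
  have pb: "Phi h F = (\<Sum>i<?n. smult (coeff F i) (wpow (yhat h) i))" by (rule Phi_bound) simp
  have "wmult (yhat h) (Phi h F) - wmult (Phi h F) (yhat h)
      = (\<Sum>i<?n. wmult (yhat h) (smult (coeff F i) (wpow (yhat h) i))
                - wmult (smult (coeff F i) (wpow (yhat h) i)) (yhat h))"
    unfolding pb wmult_sum_right wmult_sum_left sum_subtractf ..
  also have "\<dots> = (\<Sum>i<?n. smult (h * pderiv (coeff F i)) (wpow (yhat h) i))"
    by (intro sum.cong refl) (simp add: yhat_smult wmult_smult_left wpow_Suc_right)
  also have "\<dots> = Phi h (map_poly (\<lambda>f. h * pderiv f) F)"
    using dg by (simp add: Phi_bound[of _ ?n] coeff_map_poly)
  finally show ?thesis .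
qed

definition MC :: "'a::field poly \<Rightarrow> 'a poly poly set" where
  "MC h = {F. \<forall>i. \<exists>f. coeff F i = pderiv f * h}"

lemma commset_yhat: "commset h (yhat h) = Phi h ` MC h"
proof -
  have "commset h (yhat h) = {Phi h (map_poly (\<lambda>f. h * pderiv f) F) | F. True}"
    unfolding commset_def
  proof safe
    fix a assume "a \<in> Ah h"
    then obtain F where "a = Phi h F" using Ah_Phi by blast
    then show "\<exists>F. wmult (yhat h) a - wmult a (yhat h) = Phi h (map_poly (\<lambda>f. h * pderiv f) F) \<and> True"
      using comm_yhat by blast
  next
    fix F
    show "\<exists>a. Phi h (map_poly (\<lambda>f. h * pderiv f) F) = wmult (yhat h) a - wmult a (yhat h) \<and> a \<in> Ah h"
      using comm_yhat[of h F] Phi_in_Ah[of h F] by metis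
  qed
  also have "\<dots> = Phi h ` {map_poly (\<lambda>f. h * pderiv f) F | F. True}" by blast
  also have "{map_poly (\<lambda>f. h * pderiv f) F | F. True} = MC h"
  proof safe
    fix F show "map_poly (\<lambda>f. h * pderiv f) F \<in> MC h"
      unfolding MC_def by (auto simp: coeff_map_poly mult.commute)
  next
    fix G assume G: "G \<in> MC h"
    define fs where "fs i = (SOME f. coeff G i = pderiv f * h)" for i
    have fs: "coeff G i = pderiv (fs i) * h" for i
    proof -
      have "\<exists>f. coeff G i = pderiv f * h" using G unfolding MC_def by blast
      then show ?thesis unfolding fs_def by (rule someI_ex)
    qed
    define F where "F = mkp fs (degree G)"
    have "G = map_poly (\<lambda>f. h * pderiv f) F"
    proof (rule poly_eqI)
      fix i show "coeff G i = coeff (map_poly (\<lambda>f. h * pderiv f) F) i"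
      proof (cases "i \<le> degree G")
        case True
        then show ?thesis by (simp add: F_def coeff_map_poly coeff_mkp fs mult.commute)
      next
        case False
        then have "coeff G i = 0" by (intro coeff_eq_0) simp
        then show ?thesis using False by (simp add: F_def coeff_map_poly coeff_mkp)
      qed
    qed
    then show "\<exists>F. G = map_poly (\<lambda>f. h * pderiv f) F \<and> True" by blast
  qed
  finally show ?thesis .
qed

lemma MC_0: "0 \<in> MC h"
  unfolding MC_def by (auto intro: exI[of _ 0])

lemma MC_add: "a \<in> MC h \<Longrightarrow> b \<in> MC h \<Longrightarrow> a + b \<in> MC h"
  unfolding MC_def
proof (intro CollectI allI)
  fix i assume a: "a \<in> {F. \<forall>i. \<exists>f. coeff F i = pderiv f * h}" and b: "b \<in> {F. \<forall>i. \<exists>f. coeff F i = pderiv f * h}"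
  obtain f g where "coeff a i = pderiv f * h" "coeff b i = pderiv g * h" using a b by blast
  then have "coeff (a + b) i = pderiv (f + g) * h" by (simp add: pderiv_add distrib_right)
  then show "\<exists>f. coeff (a + b) i = pderiv f * h" by blast
qed

lemma setcompr_True: "{g f | f. True} = range g"
  by auto

lemma claim_c1:
  fixes h :: "'a::field poly"
  assumes h: "h \<noteq> 0"
  shows "is_dsum (commset h (yhat h)) (\<lambda>i. {wmult (W (pderiv f * h)) (wpow (yhat h) i) | f. True})"
proof -
  have eqV: "(\<lambda>i. {wmult (W (pderiv f * h)) (wpow (yhat h) i) | f. True})
     = (\<lambda>i. Phi h ` {monom (pderiv f * h) i | f. True})"
    by (rule ext) (simp only: setcompr_True image_image wmult_W Phi_monom)
  have "is_dsum (MC h) (\<lambda>i. {monom (pderiv f * h) i | f. True})"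
  proof (rule dsum_single)
    fix i and v :: "'a poly poly" assume "v \<in> {monom (pderiv f * h) i | f. True}"
    then show "v = monom (coeff v i) i" by auto
  next
    fix n and v :: "nat \<Rightarrow> 'a poly poly" assume v: "\<forall>i<n. v i \<in> {monom (pderiv f * h) i | f. True}"
    have "v i \<in> MC h" if iv: "i < n" for i
    proof -
      obtain f where "v i = monom (pderiv f * h) i" using v iv by auto
      then show ?thesis unfolding MC_def
        by (auto simp: coeff_monom intro: exI[of _ 0] exI[of _ f])
    qed
    then show "(\<Sum>i<n. v i) \<in> MC h" by (intro closed_sum MC_0 MC_add) auto
  next
    fix m i assume "m \<in> MC h"
    then obtain f where "coeff m i = pderiv f * h" unfolding MC_def by blast
    then show "monom (coeff m i) i \<in> {monom (pderiv f * h) i | f. True}" by auto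
  qed
  then have "is_dsum (Phi h ` MC h) (\<lambda>i. Phi h ` {monom (pderiv f * h) i | f. True})"
    using dsum_transport[where \<Phi> = "Phi h", OF Phi_add Phi_inj[OF h]] by blast
  then show ?thesis unfolding eqV commset_yhat .
qed

definition CC :: "'a::field poly poly set" where
  "CC = {F. \<forall>i. degree (coeff F i) = 0}"

lemma CC_mult:
  assumes F: "F \<in> CC" and G: "G \<in> CC" shows "F * G \<in> CC"
  unfolding CC_def
proof (intro CollectI allI)
  fix n
  have "degree (coeff (F * G) n) \<le> 0"
    unfolding coeff_mult
  proof (rule degree_sum_le)
    fix i show "degree (coeff F i * coeff G (n - i)) \<le> 0"
      using degree_mult_le[of "coeff F i" "coeff G (n - i)"] F G by (simp add: CC_def)
  qed simp
  then show "degree (coeff (F * G) n) = 0" by simp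
qed

lemma Phi_pCons: "Phi h (pCons a F) = smult a 1 + wmult (Phi h F) (yhat h)"
proof -
  let ?d = "degree F"
  have "degree (pCons a F) < Suc (Suc ?d)" by simp
  then have "Phi h (pCons a F) = (\<Sum>i<Suc (Suc ?d). smult (coeff (pCons a F) i) (wpow (yhat h) i))"
    by (rule Phi_bound)
  also have "\<dots> = smult a 1 + (\<Sum>i<Suc ?d. smult (coeff F i) (wpow (yhat h) (Suc i)))"
    by (subst sum.lessThan_Suc_shift) simp
  also have "(\<Sum>i<Suc ?d. smult (coeff F i) (wpow (yhat h) (Suc i)))
      = (\<Sum>i<Suc ?d. wmult (smult (coeff F i) (wpow (yhat h) i)) (yhat h))"
    by (intro sum.cong refl) (simp only: wmult_smult_left wpow_Suc_right)
  also have "\<dots> = wmult (Phi h F) (yhat h)"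
    by (simp only: wmult_sum_left[symmetric] Phi_bound[of F "Suc ?d", OF lessI])
  finally show ?thesis .
qed

lemma CC_pCons: "pCons b G \<in> CC \<Longrightarrow> G \<in> CC \<and> b = [:coeff b 0:]"
proof -
  assume a: "pCons b G \<in> CC"
  have "degree (coeff (pCons b G) (Suc i)) = 0" for i using a unfolding CC_def by blast
  then have "G \<in> CC" unfolding CC_def by simp
  moreover have "degree (coeff (pCons b G) 0) = 0" using a unfolding CC_def by blast
  then have "b = [:coeff b 0:]" using degree_0_id[of b] by simp
  ultimately show ?thesis by simp
qed

lemma Phi_mult_CC:
  assumes F: "F \<in> CC" and G: "G \<in> CC"
  shows "wmult (Phi h F) (Phi h G) = Phi h (F * G)"
  using G
proof (induct G rule: pCons_induct)
  case 0
  then show ?case by simp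
next
  case (pCons b G)
  then have G': "G \<in> CC" and b: "b = [:coeff b 0:]" using CC_pCons by blast+
  have e1: "wmult (Phi h F) [:b:] = smult b (Phi h F)"
  proof -
    have "wmult (Phi h F) (smult [:coeff b 0:] 1) = smult [:coeff b 0:] (Phi h F)"
      by (simp only: wmult_smult_const_right wmult_1_right)
    then show ?thesis using b by simp
  qed
  have "wmult (Phi h F) (Phi h (pCons b G))
      = smult b (Phi h F) + wmult (wmult (Phi h F) (Phi h G)) (yhat h)"
    by (simp add: Phi_pCons wmult_add_right e1 wmult_assoc)
  also have "\<dots> = Phi h (F * pCons b G)"
    using pCons(2)[OF G'] by (simp add: Phi_add Phi_smult Phi_pCons)
  finally show ?case .
qed

lemma CC_0: "0 \<in> CC" by (simp add: CC_def)
lemma CC_add: "F \<in> CC \<Longrightarrow> G \<in> CC \<Longrightarrow> F + G \<in> CC"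
proof -
  assume F: "F \<in> CC" and G: "G \<in> CC"
  have "degree (coeff (F + G) i) = 0" for i
    using degree_add_le_max[of "coeff F i" "coeff G i"] F G by (simp add: CC_def)
  then show ?thesis by (simp add: CC_def)
qed

lemma gen_alg_yhat: "gen_alg {yhat h} = Phi h ` CC"
proof
  show "gen_alg {yhat h} \<subseteq> Phi h ` CC"
  proof
    fix P assume "P \<in> gen_alg {yhat h}"
    then show "P \<in> Phi h ` CC"
    proof induct
      case (gen s)
      have "yhat h = Phi h (monom 1 1)" by (simp add: Phi_monom)
      moreover have "monom 1 1 \<in> CC" by (simp add: CC_def coeff_monom)
      ultimately show ?case using gen by (metis image_eqI singletonD)
    next
      case one
      have "Phi h (monom 1 0) = 1" by (simp only: Phi_monom) simp
      then have "1 = Phi h (monom 1 0)" by simp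
      moreover have "monom 1 0 \<in> CC" by (simp add: CC_def coeff_monom)
      ultimately show ?case by blast
    next
      case (scal a c)
      then obtain F where F: "F \<in> CC" "a = Phi h F" by blast
      have "W [:c:] * a = Phi h (smult [:c:] F)" by (simp add: F W_def Phi_smult)
      moreover have "smult [:c:] F \<in> CC"
      proof -
        have "degree (coeff (smult [:c:] F) i) = 0" for i
          using degree_mult_le[of "[:c:]" "coeff F i"] F(1) by (simp add: CC_def)
        then show ?thesis by (simp add: CC_def)
      qed
      ultimately show ?case by blast
    next
      case (add a b)
      then obtain F G where "F \<in> CC" "a = Phi h F" "G \<in> CC" "b = Phi h G" by blast
      then show ?case using CC_add by (auto simp flip: Phi_add)
    next
      case (mult a b)
      then obtain F G where FG: "F \<in> CC" "a = Phi h F" "G \<in> CC" "b = Phi h G" by blast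
      then have "wmult a b = Phi h (F * G)" using Phi_mult_CC by simp
      moreover have "F * G \<in> CC" using FG CC_mult by blast
      ultimately show ?case by (rule image_eqI)
    qed
  qed
  show "Phi h ` CC \<subseteq> gen_alg {yhat h}"
  proof
    fix P assume "P \<in> Phi h ` CC"
    then obtain F where F: "F \<in> CC" "P = Phi h F" by blast
    have "smult (coeff F i) (wpow (yhat h) i) \<in> gen_alg {yhat h}" for i
    proof -
      have "coeff F i = [:coeff (coeff F i) 0:]" using degree_0_id[of "coeff F i"] F(1) unfolding CC_def by simp
      moreover have "W [:coeff (coeff F i) 0:] * wpow (yhat h) i \<in> gen_alg {yhat h}"
        by (intro gen_alg.scal gen_alg_wpow) simp
      ultimately show ?thesis by (simp add: W_def)
    qed
    then show "P \<in> gen_alg {yhat h}" unfolding F(2) Phi_def by (intro gen_alg_sum)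
  qed
qed

lemma wpow_WX: "wpow WX j = W (monom 1 j)"
  by (induct j) (simp_all add: wmult_WX W_def monom_Suc one_pCons)

lemma sum_monom_bound:
  assumes "degree g < n"
  shows "(\<Sum>j<n. monom (coeff g j) j) = g"
proof -
  have "(\<Sum>j<n. monom (coeff g j) j) = (\<Sum>j<Suc (degree g). monom (coeff g j) j)"
    using assms by (intro sum.mono_neutral_right) (auto simp: coeff_eq_0)
  then show ?thesis by (simp add: lessThan_Suc_atMost poly_as_sum_of_monoms)
qed

lemma coeff_V2:
  assumes "F \<in> CC"
  shows "coeff (smult (h * monom 1 j) F) i = h * monom (coeff (coeff F i) 0) j"
proof -
  have "coeff F i = [:coeff (coeff F i) 0:]" using degree_0_id[of "coeff F i"] assms unfolding CC_def by simp
  then have "coeff (smult (h * monom 1 j) F) i = h * monom 1 j * [:coeff (coeff F i) 0:]" by simp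
  also have "\<dots> = h * monom (coeff (coeff F i) 0) j" by (simp add: smult_monom flip: mult_smult_right)
  finally show ?thesis .
qed

lemma claim_c2:
  fixes h :: "'a::field poly"
  assumes h: "h \<noteq> 0" and p: "CHAR('a) > 0"
  shows "is_dsum (commset h (yhat h))
           (\<lambda>j. if (j + 1) mod CHAR('a) \<noteq> 0
                then {wmult (W h) (wmult (wpow WX j) q) | q. q \<in> gen_alg {yhat h}} else {0})"
proof -
  let ?p = "CHAR('a)"
  define V2 where "V2 j = (if (j + 1) mod ?p \<noteq> 0 then {smult (h * monom 1 j) F | F. F \<in> CC} else {0})" for j
  have eqV: "(\<lambda>j. if (j + 1) mod ?p \<noteq> 0
                then {wmult (W h) (wmult (wpow WX j) q) | q. q \<in> gen_alg {yhat h}} else {0})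
           = (\<lambda>j. Phi h ` V2 j)"
  proof (rule ext)
    fix j
    have "{wmult (W h) (wmult (wpow WX j) q) | q. q \<in> gen_alg {yhat h}}
        = (\<lambda>q. wmult (W h) (wmult (wpow WX j) q)) ` (Phi h ` CC)"
      by (simp only: gen_alg_yhat Setcompr_eq_image)
    also have "\<dots> = Phi h ` ((\<lambda>F. smult (h * monom 1 j) F) ` CC)"
      by (simp add: image_image wpow_WX wmult_W Phi_smult)
    also have "\<dots> = Phi h ` {smult (h * monom 1 j) F | F. F \<in> CC}"
      by (simp only: Setcompr_eq_image)
    finally show "(if (j + 1) mod ?p \<noteq> 0
                then {wmult (W h) (wmult (wpow WX j) q) | q. q \<in> gen_alg {yhat h}} else {0})
        = Phi h ` V2 j" by (simp add: V2_def)
  qed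
  define rho where "rho j c = monom (coeff (c div h) j) j" for j and c :: "'a poly"
  have rho0: "rho j 0 = 0" for j by (simp add: rho_def)
  have rho_add: "rho j (a + b) = rho j a + rho j b" for j a b
    by (simp add: rho_def poly_div_add_left add_monom)
  have rho_elem: "rho j' (h * monom c j) = (if j' = j then monom c j else 0)" for j' j c
    using h by (simp add: rho_def coeff_monom)
  have cmap: "coeff (map_poly (rho j) F) i = rho j (coeff F i)" for j F i
    by (rule coeff_map_poly) (rule rho0)
  have pm: "coeff (smult h (map_poly (rho j) F)) n = h * rho j (coeff F n)" for j F n
    by (simp add: cmap)
  have "is_dsum (MC h) V2"
  proof (rule dsumI[where \<pi> = "\<lambda>j F. smult h (map_poly (rho j) F)"])
    fix n and v :: "nat \<Rightarrow> 'a poly poly" assume v: "\<forall>i<n. v i \<in> V2 i"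
    have "x \<in> MC h" if xV: "x \<in> V2 j" for x j
    proof (cases "(j + 1) mod ?p \<noteq> 0")
      case True
      then obtain F where F: "F \<in> CC" "x = smult (h * monom 1 j) F" using xV by (auto simp: V2_def)
      have "\<not> CHAR('a) dvd Suc j" using True by (simp add: mod_eq_0_iff_dvd)
      then have nz: "of_nat (Suc j) \<noteq> (0::'a)" using of_nat_eq_0_iff_char_dvd[of "Suc j", where 'a='a] by blast
      show ?thesis unfolding MC_def
      proof (intro CollectI allI)
        fix i
        let ?c = "coeff (coeff F i) 0"
        have "pderiv (monom (?c / of_nat (Suc j)) (Suc j)) * h = h * monom ?c j"
          using nz by (simp add: pderiv_monom mult.commute)
        then show "\<exists>f. coeff x i = pderiv f * h" unfolding F(2) coeff_V2[OF F(1)] by metis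
      qed
    next
      case False
      then show ?thesis using xV MC_0 by (simp add: V2_def)
    qed
    then show "(\<Sum>i<n. v i) \<in> MC h" using v by (intro closed_sum MC_0 MC_add) auto
  next
    fix j a b
    show "smult h (map_poly (rho j) (a + b)) = smult h (map_poly (rho j) a) + smult h (map_poly (rho j) b)"
      by (rule poly_eqI) (simp add: cmap rho_add distrib_left)
  next
    fix j v assume v: "v \<in> V2 j"
    show "smult h (map_poly (rho j) v) = v"
    proof (cases "(j + 1) mod ?p \<noteq> 0")
      case True
      then obtain F where F: "F \<in> CC" "v = smult (h * monom 1 j) F" using v by (auto simp: V2_def)
      show ?thesis
        by (rule poly_eqI) (unfold pm F(2) coeff_V2[OF F(1)] rho_elem, simp)
    next
      case False
      then show ?thesis using v by (simp add: V2_def)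
    qed
  next
    fix i j v assume v: "v \<in> V2 j" and ij: "i \<noteq> j"
    show "smult h (map_poly (rho i) v) = 0"
    proof (cases "(j + 1) mod ?p \<noteq> 0")
      case True
      then obtain F where F: "F \<in> CC" "v = smult (h * monom 1 j) F" using v by (auto simp: V2_def)
      show ?thesis
        by (rule poly_eqI) (unfold pm F(2) coeff_V2[OF F(1)] rho_elem, simp add: ij)
    next
      case False
      then show ?thesis using v by (simp add: V2_def)
    qed
  next
    fix m assume m: "m \<in> MC h"
    define g where "g i = coeff m i div h" for i
    have mf: "\<exists>f. coeff m i = pderiv f * h" for i using m unfolding MC_def by blast
    have hg: "h * g i = coeff m i" for i
    proof -
      obtain f where "coeff m i = pderiv f * h" using mf by blast
      then show ?thesis using h by (simp add: g_def)
    qed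
    define B where "B = (\<Sum>i\<le>degree m. degree (g i))"
    have gB: "degree (g i) < Suc B" for i
    proof (cases "i \<le> degree m")
      case True
      then have "degree (g i) \<le> B" unfolding B_def by (intro member_le_sum) auto
      then show ?thesis by simp
    next
      case False
      then have "coeff m i = 0" by (intro coeff_eq_0) simp
      then show ?thesis by (simp add: g_def)
    qed
    have sum: "m = (\<Sum>j<Suc B. smult h (map_poly (rho j) m))"
    proof (rule poly_eqI)
      fix i
      have "coeff (\<Sum>j<Suc B. smult h (map_poly (rho j) m)) i = h * (\<Sum>j<Suc B. monom (coeff (g i) j) j)"
        unfolding coeff_sum pm sum_distrib_left by (simp add: rho_def g_def)
      also have "\<dots> = coeff m i" unfolding sum_monom_bound[OF gB[of i]] by (rule hg)
      finally show "coeff m i = coeff (\<Sum>j<Suc B. smult h (map_poly (rho j) m)) i" by simp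
    qed
    have inV: "smult h (map_poly (rho j) m) \<in> V2 j" for j
    proof (cases "(j + 1) mod ?p \<noteq> 0")
      case True
      define F where "F = map_poly (\<lambda>c. [:coeff (c div h) j:]) m"
      have cF: "coeff F i = [:coeff (g i) j:]" for i
        unfolding F_def g_def by (rule coeff_map_poly) simp
      have F: "F \<in> CC" by (simp add: CC_def cF)
      have "smult h (map_poly (rho j) m) = smult (h * monom 1 j) F"
        by (rule poly_eqI) (unfold pm coeff_V2[OF F] cF, simp add: rho_def g_def)
      then show ?thesis using True F by (auto simp: V2_def)
    next
      case False
      then have "CHAR('a) dvd Suc j" by (simp add: mod_eq_0_iff_dvd)
      then have z: "of_nat (Suc j) = (0::'a)" using of_nat_eq_0_iff_char_dvd[of "Suc j", where 'a='a] by blast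
      have "smult h (map_poly (rho j) m) = 0"
      proof (rule poly_eqI)
        fix i
        obtain f where f: "coeff m i = pderiv f * h" using mf by blast
        have "coeff (coeff m i div h) j = 0" using h z by (simp add: f coeff_pderiv)
        then show "coeff (smult h (map_poly (rho j) m)) i = coeff 0 i" by (simp add: cmap rho_def)
      qed
      then show ?thesis using False by (simp add: V2_def)
    qed
    show "\<exists>n. (\<forall>i<n. smult h (map_poly (rho i) m) \<in> V2 i) \<and> m = (\<Sum>i<n. smult h (map_poly (rho i) m))"
      using inV sum by blast
  qed
  then have "is_dsum (Phi h ` MC h) (\<lambda>j. Phi h ` V2 j)"
    using dsum_transport[where \<Phi> = "Phi h", OF Phi_add Phi_inj[OF h]] by blast
  then show ?thesis unfolding eqV commset_yhat .
qed


theorem lemma6p3: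
  fixes h :: "'a::field poly"
  assumes "h \<noteq> 0"
  shows "(CHAR('a) = 0 \<longrightarrow> Cx h = {W f | f. True})
    \<and> (CHAR('a) > 0 \<longrightarrow>
      (let p = CHAR('a) in
         Cx h = gen_alg {WX, wmult (W (h ^ p)) (wpow WY p)}
       \<and> is_dsum (Cx h)
           (\<lambda>i. if p dvd i then {wmult (W f) (wmult (W (h ^ i)) (wpow WY i)) | f. True} else {0})
       \<and> is_dsum (commset h WX)
           (\<lambda>i. if (i + 1) mod p \<noteq> 0
                then {wmult (W h) (wmult (W f) (wmult (W (h ^ i)) (wpow WY i))) | f. True} else {0})
       \<and> is_dsum (commset h WX)
           (\<lambda>i. if i \<le> p - 2
                then {wmult (W h) (wmult c (wmult (W (h ^ i)) (wpow WY i))) | c. c \<in> Cx h} else {0})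
       \<and> is_dsum (commset h (yhat h))
           (\<lambda>i. {wmult (W (pderiv f * h)) (wpow (yhat h) i) | f. True})
       \<and> is_dsum (commset h (yhat h))
           (\<lambda>j. if (j + 1) mod p \<noteq> 0
                then {wmult (W h) (wmult (wpow WX j) q) | q. q \<in> gen_alg {yhat h}} else {0})))"
  proof -
  have c0: "CHAR('a) = 0 \<longrightarrow> Cx h = {W f | f. True}" using Cx_char0 by blast
  {
    assume p: "CHAR('a) > 0"
    note a1 = Cx_gen[OF p, of h]
    note a2 = claim_a2[of h]
    note b1 = claim_b1[of h]
    note b2 = claim_b2[OF assms p]
    note c1 = claim_c1[OF assms]
    note c2 = claim_c2[OF assms p]
    note a1 a2 b1 b2 c1 c2
  }
  then show ?thesis using c0 unfolding Let_def by blast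
qed

end
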